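(* Assume model $\mathcal M_{\mathrm s}$ and $\alpha\in(0,1]$. Let $\mathbb T^A\in\mathcal T_\alpha$, $t_0\ge1$, and let $\{x_t,s_t:1\le t\le t_0\}$ be any sequence in the support of the process $\{(X_{k,t})_{k\in S^A_t},S^A_t:1\le t\le t_0\}$ generated by $\mathbb T^A$. Then there exist $\mathcal S_{\mathrm o}$-valued random variables $(\hat W,\hat W')$ on a common probability space such that $\hat W$ has the conditional law of $[(W^{G(t_0)}_{k,t_0+1})_{k\in S^{G(t_0)}_{t_0+1}}]$ given $\{(X_{k,t})_{k\in S^A_t}=x_t,\ S^A_t=s_t,\ 1\le t\le t_0\}$, $\hat W'$ has the conditional law of $[(W^{G(t_0+1)}_{k,t_0+1})_{k\in S^{G(t_0+1)}_{t_0+1}}]$ given the same event, and $\hat W\preccurlyeq\hat W'$ almost surely.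
   Context: There are $K\ge1$ data streams. Each stream $k$ has a change point $\tau_k\in\{0,1,2,\dots\}\cup\{\infty\}$. Observations $X_{k,t}$ ($1\le k\le K$, $t=1,2,\dots$) are, conditionally on $(\tau_1,\dots,\tau_K)$, independent over $k$ and $t$, with $X_{k,t}$ having density $p_{k,t}$ if $t\le\tau_k$ and $q_{k,t}$ if $t>\tau_k$ with respect to a baseline measure $\mu$. Model $\mathcal M_{\mathrm s}$: $\tau_1,\dots,\tau_K$ are i.i.d. with $\mathbb P(\tau_k=m)=\theta(1-\theta)^m$, $m=0,1,2,\dots$, for some $\theta\in(0,1)$, and $p_{k,t}=p$, $q_{k,t}=q$ for all $k,t$. A compound sequential detection procedure consists of index sets $S_1=\{1,\dots,K\}\supseteq S_2\supseteq\cdots$ and a filtration defined inductively by $\mathcal F_1=\sigma(X_{k,1}:1\le k\le K)$ and $\mathcal F_t=\sigma(\mathcal F_{t-1},S_t,X_{k,t}:k\in S_t)$ for $t>1$, where $S_t$ is required to be $\mathcal F_{t-1}$-measurable. $\mathcal T$ is the set of all such procedures. For $t\ge1$, $\mathrm{FNP}_{t+1}(\mathbb T)=\sum_{k\in S_{t+1}}\mathbf 1(\tau_k<t)/(|S_{t+1}|\vee1)$, $\mathrm{LFNR}_{t+1}(\mathbb T)=\mathbb E(\mathrm{FNP}_{t+1}(\mathbb T)\mid\mathcal F_t)$, $\mathrm{LFNR}_1(\mathbb T)=0$. $\mathcal T_\alpha=\{\mathbb T\in\mathcal T:\mathrm{LFNR}_t(\mathbb T)\le\alpha\text{ a.s.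 for all }t\ge1\}$. Posterior probabilities: $W_{k,t}=\mathbb P(\tau_k<t\mid\mathcal F_t)$. One-step update rule: given $\alpha$, $S_t$ and $(W_{k,t})_{k\in S_t}$, write $S_t=\{k_1,\dots,k_m\}$ ordered so that $W_{k_1,t}\le\cdots\le W_{k_m,t}$, ties broken so that $k_i<k_{i+1}$ when $W_{k_i,t}=W_{k_{i+1},t}$; set $R_0=0$ and $R_n=\frac1n\sum_{i=1}^nW_{k_i,t}$; let $n$ be the largest element of $\{0,\dots,m\}$ with $R_n\le\alpha$; output $S_{t+1}=\{k_1,\dots,k_n\}$ ($\emptyset$ if $n=0$). Switching procedure: for $\mathbb T^A\in\mathcal T_\alpha$ with active sets $S^A_t$ and $t_0\ge0$, $\mathbb T^{G(t_0)}$ is the procedure with $S^{G(t_0)}_t=S^A_t$ for $1\le t\le t_0$ and, for every $t\ge\max(t_0,1)$, $S^{G(t_0)}_{t+1}$ equal to the output of the one-step rule applied to $S^{G(t_0)}_t$ and its own posteriors $W^{G(t_0)}_{k,t}=\mathbb P(\tau_k<t\mid\mathcal F^{G(t_0)}_t)$. $\mathcal S_{\mathrm o}=\bigcup_{m=1}^K\{(v_1,\dots,v_m)\in[0,1]^m:v_1\le\cdots\le v_m\}\cup\{\varnothing\}$, where $\varnothing$ is the vector of length $0$; $\dim(\mathbf u)$ is the length of $\mathbf u$. Partial order: for $\mathbf u,\mathbf v\in\mathcal S_{\mathrm o}$, $\mathbf u\preccurlyeq\mathbf v$ iff $\dim(\mathbf u)\ge\dim(\mathbf v)$ and $u_i\le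 v_i$ for $i=1,\dots,\dim(\mathbf v)$ (in particular $\mathbf u\preccurlyeq\varnothing$ for all $\mathbf u$). For a finite vector $\mathbf v$, $[\mathbf v]$ is its order statistic (components sorted increasingly), $[\varnothing]=\varnothing$. *)

theory Defs
  imports "HOL-Probability.Probability"
begin

(* Under model M_s, P(tau_k = infinity) = 0, so tau_k ranges over nat. *)

definition Tau :: "nat \<Rightarrow> (nat \<Rightarrow> nat) set" where
  "Tau K = {\<tau>. \<forall>k. k \<notin> {1..K} \<longrightarrow> \<tau> k = 0}"

definition prior :: "real \<Rightarrow> nat \<Rightarrow> (nat \<Rightarrow> nat) \<Rightarrow> real" where
  "prior \<theta> K \<tau> = (\<Prod>k\<in>{1..K}. \<theta> * (1 - \<theta>) ^ (\<tau> k))"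

definition obs_dens :: "('x \<Rightarrow> real) \<Rightarrow> ('x \<Rightarrow> real) \<Rightarrow> nat \<Rightarrow> nat \<Rightarrow> 'x \<Rightarrow> real" where
  "obs_dens p q m t x = (if t \<le> m then p x else q x)"

(* An observed history up to time t is a list of length t whose (i+1)-th entry
   (index i) is (S_{i+1}, x_{i+1}), x_{i+1} k being the observed value X_{k,i+1}
   for k in S_{i+1}. *)
type_synonym 'x history = "(nat set \<times> (nat \<Rightarrow> 'x)) list"

(* density (w.r.t. the product of the baseline measure) of the observed
   history given the change points (the selection indicators of an adaptive
   procedure do not depend on tau and cancel in every conditional law) *)
definition lik :: "('x \<Rightarrow> real) \<Rightarrow> ('x \<Rightarrow> real) \<Rightarrow> 'x history \<Rightarrow> (nat \<Rightarrow> nat) \<Rightarrow> real" where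
  "lik p q h \<tau> = (\<Prod>i<length h. \<Prod>k\<in>fst (h ! i). obs_dens p q (\<tau> k) (Suc i) (snd (h ! i) k))"

definition mdens :: "real \<Rightarrow> nat \<Rightarrow> ('x \<Rightarrow> real) \<Rightarrow> ('x \<Rightarrow> real) \<Rightarrow> 'x history \<Rightarrow> real" where
  "mdens \<theta> K p q h = (\<Sum>\<^sub>\<infinity>\<tau>\<in>Tau K. prior \<theta> K \<tau> * lik p q h \<tau>)"

definition cexp :: "real \<Rightarrow> nat \<Rightarrow> ('x \<Rightarrow> real) \<Rightarrow> ('x \<Rightarrow> real) \<Rightarrow> 'x history
                     \<Rightarrow> ((nat \<Rightarrow> nat) \<Rightarrow> real) \<Rightarrow> real" where
  "cexp \<theta> K p q h f = (\<Sum>\<^sub>\<infinity>\<tau>\<in>Tau K. prior \<theta> K \<tau> * lik p q h \<tau> * f \<tau>) / mdens \<theta> K p q h"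

(* posterior probability W_{k,t} = P(tau_k < t | F_t), t = length h *)
definition Wpost :: "real \<Rightarrow> nat \<Rightarrow> ('x \<Rightarrow> real) \<Rightarrow> ('x \<Rightarrow> real) \<Rightarrow> 'x history \<Rightarrow> nat \<Rightarrow> real" where
  "Wpost \<theta> K p q h k = cexp \<theta> K p q h (\<lambda>\<tau>. if \<tau> k < length h then 1 else 0)"

definition FNP :: "nat \<Rightarrow> nat set \<Rightarrow> (nat \<Rightarrow> nat) \<Rightarrow> real" where
  "FNP t S \<tau> = (\<Sum>k\<in>S. if \<tau> k < t then 1 else 0) / real (max (card S) 1)"

(* A procedure is a map A from observed histories of length t >= 1 to S_{t+1};
   S_1 = {1..K} always. *)
definition consistent :: "nat \<Rightarrow> ('x history \<Rightarrow> nat set) \<Rightarrow> 'x history \<Rightarrow> bool" where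
  "consistent K A h \<longleftrightarrow>
     (h \<noteq> [] \<longrightarrow> fst (h ! 0) = {1..K}) \<and>
     (\<forall>i. Suc i < length h \<longrightarrow> fst (h ! Suc i) = A (take (Suc i) h))"

definition is_procedure :: "nat \<Rightarrow> ('x history \<Rightarrow> nat set) \<Rightarrow> bool" where
  "is_procedure K A \<longleftrightarrow> (\<forall>h. consistent K A h \<and> h \<noteq> [] \<longrightarrow> A h \<subseteq> fst (last h))"

(* LFNR_{t+1} = E(FNP_{t+1} | F_t) at the observed history h of length t *)
definition LFNR :: "real \<Rightarrow> nat \<Rightarrow> ('x \<Rightarrow> real) \<Rightarrow> ('x \<Rightarrow> real) \<Rightarrow> ('x history \<Rightarrow> nat set)
                     \<Rightarrow> 'x history \<Rightarrow> real" where
  "LFNR \<theta> K p q A h = cexp \<theta> K p q h (FNP (length h) (A h))"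

definition in_support :: "real \<Rightarrow> nat \<Rightarrow> 'x measure \<Rightarrow> ('x \<Rightarrow> real) \<Rightarrow> ('x \<Rightarrow> real)
                          \<Rightarrow> ('x history \<Rightarrow> nat set) \<Rightarrow> 'x history \<Rightarrow> bool" where
  "in_support \<theta> K M p q A h \<longleftrightarrow> consistent K A h \<and>
     (\<forall>i<length h. snd (h ! i) \<in> (\<Pi>\<^sub>E k\<in>fst (h ! i). space M)) \<and>
     mdens \<theta> K p q h > 0"

definition T_alpha :: "real \<Rightarrow> real \<Rightarrow> nat \<Rightarrow> 'x measure \<Rightarrow> ('x \<Rightarrow> real) \<Rightarrow> ('x \<Rightarrow> real)
                       \<Rightarrow> ('x history \<Rightarrow> nat set) \<Rightarrow> bool" where
  "T_alpha \<alpha> \<theta> K M p q A \<longleftrightarrow> is_procedure K A \<and>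
     (\<forall>h. in_support \<theta> K M p q A h \<and> length h \<ge> 1 \<longrightarrow> LFNR \<theta> K p q A h \<le> \<alpha>)"

definition order_by :: "(nat \<Rightarrow> real) \<Rightarrow> nat set \<Rightarrow> nat list" where
  "order_by W S = (THE ks. distinct ks \<and> set ks = S \<and>
      sorted_wrt (\<lambda>i j. W i < W j \<or> (W i = W j \<and> i < j)) ks)"

definition R_avg :: "(nat \<Rightarrow> real) \<Rightarrow> nat list \<Rightarrow> nat \<Rightarrow> real" where
  "R_avg W ks n = (if n = 0 then 0 else (\<Sum>i<n. W (ks ! i)) / real n)"

definition onestep :: "real \<Rightarrow> nat set \<Rightarrow> (nat \<Rightarrow> real) \<Rightarrow> nat set" where
  "onestep \<alpha> S W =
     (let ks = order_by W S;
          n = (GREATEST n. n \<le> length ks \<and> R_avg W ks n \<le> \<alpha>)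
      in set (take n ks))"

definition switch :: "real \<Rightarrow> nat \<Rightarrow> ('x \<Rightarrow> real) \<Rightarrow> ('x \<Rightarrow> real) \<Rightarrow> real
                      \<Rightarrow> ('x history \<Rightarrow> nat set) \<Rightarrow> nat \<Rightarrow> ('x history \<Rightarrow> nat set)" where
  "switch \<theta> K p q \<alpha> A t0 = (\<lambda>h. if length h < t0 then A h
                                  else onestep \<alpha> (fst (last h)) (Wpost \<theta> K p q h))"

(* measurable space of finite real vectors (lists): disjoint union of R^n *)
definition list_borel :: "real list measure" where
  "list_borel = sigma UNIV
     (range (\<lambda>n. {xs. length xs = n}) \<union>
      {{xs. i < length xs \<and> xs ! i \<in> B} | i B. B \<in> sets borel})"

(* S_o (vectors of length at most K, as all active sets are subsets of {1..K}) *)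
definition So :: "nat \<Rightarrow> real list set" where
  "So K = {v. sorted v \<and> set v \<subseteq> {0..1} \<and> length v \<le> K}"

definition Mo :: "nat \<Rightarrow> real list measure" where
  "Mo K = restrict_space list_borel (So K)"

definition preceq :: "real list \<Rightarrow> real list \<Rightarrow> bool" where
  "preceq u v \<longleftrightarrow> length u \<ge> length v \<and> (\<forall>i<length v. u ! i \<le> v ! i)"

definition pred :: "real \<Rightarrow> nat \<Rightarrow> 'x measure \<Rightarrow> ('x \<Rightarrow> real) \<Rightarrow> ('x \<Rightarrow> real)
                    \<Rightarrow> 'x history \<Rightarrow> nat set \<Rightarrow> (nat \<Rightarrow> 'x) measure" where
  "pred \<theta> K M p q h S = density (PiM S (\<lambda>_. M))
     (\<lambda>x'. ennreal (mdens \<theta> K p q (h @ [(S, x')]) / mdens \<theta> K p q h))"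

definition next_law :: "real \<Rightarrow> nat \<Rightarrow> 'x measure \<Rightarrow> ('x \<Rightarrow> real) \<Rightarrow> ('x \<Rightarrow> real)
                        \<Rightarrow> ('x history \<Rightarrow> nat set) \<Rightarrow> 'x history \<Rightarrow> real list measure" where
  "next_law \<theta> K M p q P h =
     distr (pred \<theta> K M p q h (P h)) (Mo K)
       (\<lambda>x'. sort (map (Wpost \<theta> K p q (h @ [(P h, x')])) (sorted_list_of_set (P h))))"

end

theory Submission
  imports Defs
begin

lemma prod_PiE_summable_nonneg:
  fixes f :: "'a \<Rightarrow> 'b \<Rightarrow> real"
  assumes fin: "finite A"
    and nn: "\<And>x y. x \<in> A \<Longrightarrow> f x y \<ge> 0"
    and sm: "\<And>x. x \<in> A \<Longrightarrow> f x summable_on B x"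
  shows "(\<lambda>g. \<Prod>x\<in>A. f x (g x)) summable_on PiE A B"
proof (rule nonneg_bdd_above_summable_on)
  show "\<And>g. g \<in> PiE A B \<Longrightarrow> 0 \<le> (\<Prod>x\<in>A. f x (g x))"
    using nn by (simp add: prod_nonneg)
  define s where "s x = infsum (f x) (B x)" for x
  have "(\<Sum>p\<in>P. (\<Prod>x\<in>A. f x (p x))) \<le> prod s A"
    if P: "P \<subseteq> Pi\<^sub>E A B" and [simp]: "finite P" for P
  proof -
    define B' where "B' x = {p x| p. p\<in>P}" for x
    have fin_B'[simp]: "finite (B' x)" for x
      using that by (auto simp: B'_def)
    have [simp]: "finite (Pi\<^sub>E A B')"
      using fin by (simp add: finite_PiE)
    have [simp]: "P \<subseteq> Pi\<^sub>E A B'"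
      using that by (auto simp: B'_def)
    have B'B: "B' x \<subseteq> B x" if "x \<in> A" for x
      unfolding B'_def using P that by auto
    have s_bound: "(\<Sum>y\<in>B' x. f x y) \<le> s x" if "x \<in> A" for x
      unfolding s_def using B'B[OF that] sm[OF that] nn[OF that]
      by (intro finite_sum_le_infsum) auto
    have "(\<Sum>p\<in>P. \<Prod>x\<in>A. f x (p x)) \<le> (\<Sum>p\<in>Pi\<^sub>E A B'. \<Prod>x\<in>A. f x (p x))"
      by (rule sum_mono2) (auto simp: prod_nonneg nn)
    also have "\<dots> = (\<Prod>x\<in>A. \<Sum>y\<in>B' x. f x y)"
      by (rule prod_sum_PiE[symmetric]) (use fin in auto)
    also have "\<dots> \<le> (\<Prod>x\<in>A. s x)"
      using s_bound nn by (intro prod_mono) (auto simp: sum_nonneg)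
    finally show ?thesis .
  qed
  then show "bdd_above (sum (\<lambda>g. \<Prod>x\<in>A. f x (g x)) ` {F. F \<subseteq> PiE A B \<and> finite F})"
    by (intro bdd_aboveI) blast
qed

definition extK :: "nat \<Rightarrow> (nat \<Rightarrow> nat) \<Rightarrow> nat \<Rightarrow> nat" where
  "extK K g = (\<lambda>k. if k \<in> {1..K} then g k else 0)"

lemma bij_extK: "bij_betw (extK K) (PiE {1..K} (\<lambda>_. UNIV)) (Tau K)"
proof (rule bij_betw_byWitness[where f'="\<lambda>\<tau>. restrict \<tau> {1..K}"])
  show "\<forall>a\<in>PiE {1..K} (\<lambda>_. UNIV). restrict (extK K a) {1..K} = a"
    by (auto simp: extK_def PiE_def extensional_def fun_eq_iff)
  show "\<forall>a'\<in>Tau K. extK K (restrict a' {1..K}) = a'"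
    by (auto simp: extK_def Tau_def fun_eq_iff)
  show "extK K ` PiE {1..K} (\<lambda>_. UNIV) \<subseteq> Tau K"
    by (auto simp: extK_def Tau_def)
  show "(\<lambda>\<tau>. restrict \<tau> {1..K}) ` Tau K \<subseteq> PiE {1..K} (\<lambda>_. UNIV)"
    by auto
qed

lemma tau_prod:
  fixes \<phi> :: "nat \<Rightarrow> nat \<Rightarrow> real"
  assumes nn: "\<And>k m. k \<in> {1..K} \<Longrightarrow> \<phi> k m \<ge> 0"
    and sm: "\<And>k. k \<in> {1..K} \<Longrightarrow> \<phi> k summable_on UNIV"
  shows "(\<lambda>\<tau>. \<Prod>k\<in>{1..K}. \<phi> k (\<tau> k)) summable_on Tau K"
    and "(\<Sum>\<^sub>\<infinity>\<tau>\<in>Tau K. \<Prod>k\<in>{1..K}. \<phi> k (\<tau> k)) = (\<Prod>k\<in>{1..K}. \<Sum>\<^sub>\<infinity>m. \<phi> k m)"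
proof -
  have eq: "(\<Prod>k\<in>{1..K}. \<phi> k (extK K g k)) = (\<Prod>k\<in>{1..K}. \<phi> k (g k))" for g
    by (rule prod.cong) (auto simp: extK_def)
  have s1: "(\<lambda>g. \<Prod>k\<in>{1..K}. \<phi> k (g k)) summable_on PiE {1..K} (\<lambda>_. UNIV)"
    by (rule prod_PiE_summable_nonneg) (use nn sm in auto)
  then have "(\<lambda>g. \<Prod>k\<in>{1..K}. \<phi> k (extK K g k)) summable_on PiE {1..K} (\<lambda>_. UNIV)"
    unfolding eq .
  then show "(\<lambda>\<tau>. \<Prod>k\<in>{1..K}. \<phi> k (\<tau> k)) summable_on Tau K"
    using summable_on_reindex_bij_betw[OF bij_extK, where f="\<lambda>\<tau>. \<Prod>k\<in>{1..K}. \<phi> k (\<tau> k)"] by simp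
  have "(\<Sum>\<^sub>\<infinity>\<tau>\<in>Tau K. \<Prod>k\<in>{1..K}. \<phi> k (\<tau> k))
        = (\<Sum>\<^sub>\<infinity>g\<in>PiE {1..K} (\<lambda>_. UNIV). \<Prod>k\<in>{1..K}. \<phi> k (extK K g k))"
    using infsum_reindex_bij_betw[OF bij_extK, where f="\<lambda>\<tau>. \<Prod>k\<in>{1..K}. \<phi> k (\<tau> k)"] by simp
  also have "\<dots> = (\<Sum>\<^sub>\<infinity>g\<in>PiE {1..K} (\<lambda>_. UNIV). \<Prod>k\<in>{1..K}. \<phi> k (g k))"
    unfolding eq ..
  also have "\<dots> = (\<Prod>k\<in>{1..K}. \<Sum>\<^sub>\<infinity>m. \<phi> k m)"
  proof (rule infsum_prod_PiE_abs)
    fix k assume "k \<in> {1..K}"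
    then show "(\<lambda>m. norm (\<phi> k m)) summable_on UNIV"
    proof -
      have "(\<lambda>m. norm (\<phi> k m)) = \<phi> k" using nn[OF \<open>k \<in> {1..K}\<close>] by (auto simp: fun_eq_iff)
      then show ?thesis using sm[OF \<open>k \<in> {1..K}\<close>] by simp
    qed
  qed (rule finite_atLeastAtMost)
  finally show "(\<Sum>\<^sub>\<infinity>\<tau>\<in>Tau K. \<Prod>k\<in>{1..K}. \<phi> k (\<tau> k)) = (\<Prod>k\<in>{1..K}. \<Sum>\<^sub>\<infinity>m. \<phi> k m)" .
qed

definition gp :: "real \<Rightarrow> nat \<Rightarrow> real" where "gp \<theta> m = \<theta> * (1 - \<theta>) ^ m"

lemma gp_has_sum: "0 < \<theta> \<Longrightarrow> \<theta> < 1 \<Longrightarrow> (gp \<theta> has_sum 1) UNIV"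
proof -
  assume a: "0 < \<theta>" "\<theta> < 1"
  have "(\<lambda>n. (1 - \<theta>) ^ n) sums (1 / (1 - (1 - \<theta>)))"
    by (rule geometric_sums) (use a in auto)
  then have "(\<lambda>n. \<theta> * (1 - \<theta>) ^ n) sums (\<theta> * (1 / (1 - (1 - \<theta>))))"
    by (rule sums_mult)
  then have "gp \<theta> sums 1" using a by (simp add: gp_def[abs_def])
  then show ?thesis
    by (rule sums_nonneg_imp_has_sum) (use a in \<open>auto simp: gp_def\<close>)
qed

definition lk :: "('x \<Rightarrow> real) \<Rightarrow> ('x \<Rightarrow> real) \<Rightarrow> 'x history \<Rightarrow> nat \<Rightarrow> nat \<Rightarrow> real" where
  "lk p q h k m = (\<Prod>i<length h. if k \<in> fst (h ! i) then obs_dens p q m (Suc i) (snd (h ! i) k) else 1)"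

definition wfh :: "nat \<Rightarrow> 'x history \<Rightarrow> bool" where
  "wfh K h \<longleftrightarrow> (\<forall>i<length h. fst (h ! i) \<subseteq> {1..K})"

definition nnh :: "('x \<Rightarrow> real) \<Rightarrow> ('x \<Rightarrow> real) \<Rightarrow> 'x history \<Rightarrow> bool" where
  "nnh p q h \<longleftrightarrow> (\<forall>i<length h. \<forall>k\<in>fst (h ! i). p (snd (h ! i) k) \<ge> 0 \<and> q (snd (h ! i) k) \<ge> 0)"

lemma lik_factor:
  assumes "wfh K h"
  shows "lik p q h \<tau> = (\<Prod>k\<in>{1..K}. lk p q h k (\<tau> k))"
proof -
  have "lik p q h \<tau> = (\<Prod>i<length h. \<Prod>k\<in>{1..K}. if k \<in> fst (h ! i) then obs_dens p q (\<tau> k) (Suc i) (snd (h ! i) k) else 1)"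
    unfolding lik_def
  proof (rule prod.cong[OF refl])
    fix i assume "i \<in> {..<length h}"
    then have sub: "fst (h ! i) \<subseteq> {1..K}" using assms by (auto simp: wfh_def)
    then have "fst (h ! i) = {1..K} \<inter> fst (h ! i)" by auto
    then show "(\<Prod>k\<in>fst (h ! i). obs_dens p q (\<tau> k) (Suc i) (snd (h ! i) k)) =
          (\<Prod>k\<in>{1..K}. if k \<in> fst (h ! i) then obs_dens p q (\<tau> k) (Suc i) (snd (h ! i) k) else 1)"
      using prod.inter_restrict[OF finite_atLeastAtMost, of "\<lambda>k. obs_dens p q (\<tau> k) (Suc i) (snd (h ! i) k)" 1 K "fst (h ! i)"]
      by (simp add: Int_absorb1 Int_absorb2 sub)
  qed
  also have "\<dots> = (\<Prod>k\<in>{1..K}. lk p q h k (\<tau> k))"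
    unfolding lk_def by (rule prod.swap)
  finally show ?thesis .
qed

lemma lk_nonneg: "nnh p q h \<Longrightarrow> lk p q h k m \<ge> 0"
  unfolding lk_def nnh_def obs_dens_def by (auto intro!: prod_nonneg)

lemma lk_min: "lk p q h k m = lk p q h k (min m (length h))"
  unfolding lk_def obs_dens_def by (intro prod.cong) auto

lemma lk_bounded: "\<exists>B. \<forall>m. lk p q h k m \<le> B"
proof -
  have "lk p q h k m \<le> Max (lk p q h k ` {..length h})" for m
    by (subst lk_min) (auto intro!: Max_ge)
  then show ?thesis by blast
qed

lemma gp_nonneg: "0 < \<theta> \<Longrightarrow> \<theta> < 1 \<Longrightarrow> gp \<theta> m \<ge> 0"
  by (simp add: gp_def)

lemma summable_gp_mult:
  assumes "0 < \<theta>" "\<theta> < 1" "\<And>m. 0 \<le> c m" "\<And>m. c m \<le> B"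
  shows "(\<lambda>m. gp \<theta> m * c m) summable_on UNIV"
proof (rule summable_on_comparison_test)
  show "(\<lambda>m. B * gp \<theta> m) summable_on UNIV"
    using gp_has_sum[OF assms(1,2)] by (intro summable_on_cmult_right) (auto simp: has_sum_iff)
  show "gp \<theta> m * c m \<le> B * gp \<theta> m" for m
    using assms gp_nonneg[OF assms(1,2), of m] by (simp add: mult_right_mono mult.commute)
  show "0 \<le> gp \<theta> m * c m" for m
    using assms gp_nonneg[OF assms(1,2), of m] by simp
qed


lemma infsum_finite_sum:
  fixes f :: "'i \<Rightarrow> 'a \<Rightarrow> real"
  assumes "finite I" "\<And>i. i \<in> I \<Longrightarrow> f i summable_on A"
  shows "infsum (\<lambda>x. \<Sum>i\<in>I. f i x) A = (\<Sum>i\<in>I. infsum (f i) A)"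
    and "(\<lambda>x. \<Sum>i\<in>I. f i x) summable_on A"
  using assms
proof (induction I rule: finite_induct)
  case (insert i I)
  { case 1 then show ?case using insert by (simp add: infsum_add summable_on_add) }
  { case 2 then show ?case using insert by (simp add: summable_on_add) }
qed auto

definition Zs :: "real \<Rightarrow> ('x \<Rightarrow> real) \<Rightarrow> ('x \<Rightarrow> real) \<Rightarrow> 'x history \<Rightarrow> nat \<Rightarrow> real" where
  "Zs \<theta> p q h k = (\<Sum>\<^sub>\<infinity>m. gp \<theta> m * lk p q h k m)"

definition Ns :: "real \<Rightarrow> ('x \<Rightarrow> real) \<Rightarrow> ('x \<Rightarrow> real) \<Rightarrow> 'x history \<Rightarrow> nat \<Rightarrow> real" where
  "Ns \<theta> p q h k = (\<Sum>\<^sub>\<infinity>m. gp \<theta> m * lk p q h k m * (if m < length h then 1 else 0))"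

context
  fixes \<theta> :: real
  assumes th: "0 < \<theta>" "\<theta> < 1"
begin

lemma prior_lik:
  assumes "wfh K h"
  shows "prior \<theta> K \<tau> * lik p q h \<tau> = (\<Prod>k\<in>{1..K}. gp \<theta> (\<tau> k) * lk p q h k (\<tau> k))"
  unfolding prior_def lik_factor[OF assms] gp_def by (simp add: prod.distrib)

lemma summable_lkc:
  assumes "nnh p q h" "\<And>m. 0 \<le> c m" "\<And>m. c m \<le> 1"
  shows "(\<lambda>m. gp \<theta> m * lk p q h k m * c m) summable_on UNIV"
proof -
  obtain B where B: "\<And>m. lk p q h k m \<le> B" using lk_bounded by blast
  have "(\<lambda>m. gp \<theta> m * (lk p q h k m * c m)) summable_on UNIV"
  proof (rule summable_gp_mult[OF th])
    fix m
    show "0 \<le> lk p q h k m * c m" by (intro mult_nonneg_nonneg lk_nonneg assms)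
    have "lk p q h k m * c m \<le> lk p q h k m * 1"
      using assms lk_nonneg by (intro mult_left_mono) auto
    then show "lk p q h k m * c m \<le> B" using B[of m] by simp
  qed
  then show ?thesis by (simp add: mult.assoc)
qed

lemma factor_general:
  assumes "wfh K h" "nnh p q h" "\<And>k m. 0 \<le> c k m" "\<And>k m. c k m \<le> 1"
  shows "(\<lambda>\<tau>. prior \<theta> K \<tau> * lik p q h \<tau> * (\<Prod>k\<in>{1..K}. c k (\<tau> k))) summable_on Tau K"
    and "(\<Sum>\<^sub>\<infinity>\<tau>\<in>Tau K. prior \<theta> K \<tau> * lik p q h \<tau> * (\<Prod>k\<in>{1..K}. c k (\<tau> k)))
         = (\<Prod>k\<in>{1..K}. \<Sum>\<^sub>\<infinity>m. gp \<theta> m * lk p q h k m * c k m)"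
proof -
  have eq: "prior \<theta> K \<tau> * lik p q h \<tau> * (\<Prod>k\<in>{1..K}. c k (\<tau> k))
      = (\<Prod>k\<in>{1..K}. gp \<theta> (\<tau> k) * lk p q h k (\<tau> k) * c k (\<tau> k))" for \<tau>
    unfolding prior_lik[OF assms(1)] by (simp add: prod.distrib)
  have nn: "0 \<le> gp \<theta> m * lk p q h k m * c k m" for k m
    by (intro mult_nonneg_nonneg lk_nonneg gp_nonneg[OF th] assms)
  note tp = tau_prod[of K "\<lambda>k m. gp \<theta> m * lk p q h k m * c k m", OF nn summable_lkc[OF assms(2-4)]]
  show "(\<lambda>\<tau>. prior \<theta> K \<tau> * lik p q h \<tau> * (\<Prod>k\<in>{1..K}. c k (\<tau> k))) summable_on Tau K"
    unfolding eq by (rule tp(1))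
  show "(\<Sum>\<^sub>\<infinity>\<tau>\<in>Tau K. prior \<theta> K \<tau> * lik p q h \<tau> * (\<Prod>k\<in>{1..K}. c k (\<tau> k)))
         = (\<Prod>k\<in>{1..K}. \<Sum>\<^sub>\<infinity>m. gp \<theta> m * lk p q h k m * c k m)"
    unfolding eq by (rule tp(2))
qed

lemma mdens_factor:
  assumes "wfh K h" "nnh p q h"
  shows "mdens \<theta> K p q h = (\<Prod>k\<in>{1..K}. Zs \<theta> p q h k)"
  using factor_general(2)[OF assms, of "\<lambda>_ _. 1"] unfolding mdens_def Zs_def by simp

lemma summable_plik:
  assumes "wfh K h" "nnh p q h"
  shows "(\<lambda>\<tau>. prior \<theta> K \<tau> * lik p q h \<tau>) summable_on Tau K"
  using factor_general(1)[OF assms, of "\<lambda>_ _. 1"] by simp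

lemma ind_prod:
  fixes \<tau> :: "nat \<Rightarrow> nat" and K :: nat
  assumes "k0 \<in> {1..K}"
  shows "(if \<tau> k0 < t then 1 else 0 :: real) = (\<Prod>k\<in>{1..K}. (if k = k0 then (if \<tau> k < t then 1 else 0) else 1))"
  using assms by (subst prod.delta) auto

lemma summable_ind:
  assumes "wfh K h" "nnh p q h" "k0 \<in> {1..K}"
  shows "(\<lambda>\<tau>. prior \<theta> K \<tau> * lik p q h \<tau> * (if \<tau> k0 < t then 1 else 0)) summable_on Tau K"
  using factor_general(1)[OF assms(1,2), of "\<lambda>k m. if k = k0 then (if m < t then 1 else 0) else 1"]
  unfolding ind_prod[OF assms(3), of _ t] by simp

lemma Zs_nonneg: "nnh p q h \<Longrightarrow> Zs \<theta> p q h k \<ge> 0"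
  unfolding Zs_def by (intro infsum_nonneg mult_nonneg_nonneg lk_nonneg gp_nonneg[OF th])

lemma Wpost_formula:
  assumes "wfh K h" "nnh p q h" "k0 \<in> {1..K}" "mdens \<theta> K p q h \<noteq> 0"
  shows "Wpost \<theta> K p q h k0 = Ns \<theta> p q h k0 / Zs \<theta> p q h k0"
proof -
  let ?c = "\<lambda>k m. if k = k0 then (if m < length h then 1 else 0) else (1::real)"
  have num: "(\<Sum>\<^sub>\<infinity>\<tau>\<in>Tau K. prior \<theta> K \<tau> * lik p q h \<tau> * (if \<tau> k0 < length h then 1 else 0))
      = (\<Prod>k\<in>{1..K}. \<Sum>\<^sub>\<infinity>m. gp \<theta> m * lk p q h k m * ?c k m)"
    using factor_general(2)[OF assms(1,2), of ?c] unfolding ind_prod[OF assms(3), of _ "length h"] by simp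
  also have "\<dots> = Ns \<theta> p q h k0 * (\<Prod>k\<in>{1..K}-{k0}. Zs \<theta> p q h k)"
    using assms(3) by (subst prod.remove[of _ k0]) (auto simp: Ns_def Zs_def intro!: prod.cong)
  finally have num': "(\<Sum>\<^sub>\<infinity>\<tau>\<in>Tau K. prior \<theta> K \<tau> * lik p q h \<tau> * (if \<tau> k0 < length h then 1 else 0))
      = Ns \<theta> p q h k0 * (\<Prod>k\<in>{1..K}-{k0}. Zs \<theta> p q h k)" .
  have md: "mdens \<theta> K p q h = Zs \<theta> p q h k0 * (\<Prod>k\<in>{1..K}-{k0}. Zs \<theta> p q h k)"
    using mdens_factor[OF assms(1,2)] assms(3) by (simp add: prod.remove)
  then have "(\<Prod>k\<in>{1..K}-{k0}. Zs \<theta> p q h k) \<noteq> 0" using assms(4) by auto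
  then show ?thesis
    unfolding Wpost_def cexp_def num' md by simp
qed

end


definition As :: "real \<Rightarrow> ('x \<Rightarrow> real) \<Rightarrow> ('x \<Rightarrow> real) \<Rightarrow> 'x history \<Rightarrow> nat \<Rightarrow> real" where
  "As \<theta> p q h k = (\<Sum>\<^sub>\<infinity>m. gp \<theta> m * lk p q h k m * (if m \<le> length h then 1 else 0))"

definition mixd :: "('x \<Rightarrow> real) \<Rightarrow> ('x \<Rightarrow> real) \<Rightarrow> real \<Rightarrow> 'x \<Rightarrow> real" where
  "mixd p q \<pi> x = \<pi> * q x + (1 - \<pi>) * p x"

definition post :: "('x \<Rightarrow> real) \<Rightarrow> ('x \<Rightarrow> real) \<Rightarrow> real \<Rightarrow> 'x \<Rightarrow> real" where
  "post p q \<pi> x = \<pi> * q x / mixd p q \<pi> x"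

lemma infsum_single_nat: "(\<Sum>\<^sub>\<infinity>m::nat. if m = t then c else (0::real)) = c"
proof -
  have "(\<Sum>\<^sub>\<infinity>m::nat. if m = t then c else (0::real)) = (\<Sum>\<^sub>\<infinity>m\<in>{t}. if m = t then c else (0::real))"
    by (rule infsum_cong_neutral) auto
  then show ?thesis by simp
qed

lemma lk_step:
  "lk p q (h @ [(S, x')]) k m = lk p q h k m * (if k \<in> S then obs_dens p q m (Suc (length h)) (x' k) else 1)"
proof -
  have "(\<Prod>i<length h. if k \<in> fst ((h @ [(S, x')]) ! i) then obs_dens p q m (Suc i) (snd ((h @ [(S, x')]) ! i) k) else 1)
      = (\<Prod>i<length h. if k \<in> fst (h ! i) then obs_dens p q m (Suc i) (snd (h ! i) k) else 1)"
    by (intro prod.cong) (auto simp: nth_append)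
  then show ?thesis unfolding lk_def by simp
qed

lemma wfh_step: "wfh K h \<Longrightarrow> S \<subseteq> {1..K} \<Longrightarrow> wfh K (h @ [(S, x')])"
  unfolding wfh_def by (auto simp: nth_append less_Suc_eq)

lemma nnh_step: "nnh p q h \<Longrightarrow> (\<forall>k\<in>S. p (x' k) \<ge> 0 \<and> q (x' k) \<ge> 0) \<Longrightarrow> nnh p q (h @ [(S, x')])"
  unfolding nnh_def by (auto simp: nth_append less_Suc_eq)

context
  fixes \<theta> :: real
  assumes th: "0 < \<theta>" "\<theta> < 1"
begin

lemma sm01:
  assumes "nnh p q h" "\<And>m. c m = 0 \<or> c m = 1"
  shows "(\<lambda>m. gp \<theta> m * lk p q h k m * c m) summable_on UNIV"
  using assms(2) by (intro summable_lkc[OF th assms(1)]) (metis order.refl zero_le_one)+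

lemma geo_tail: "(\<Sum>\<^sub>\<infinity>m. gp \<theta> m * (if t \<le> m then 1 else 0)) = (1 - \<theta>) ^ t"
proof -
  have "(\<lambda>i. gp \<theta> (i + t) * (if t \<le> i + t then 1 else 0)) = (\<lambda>i. (1 - \<theta>) ^ t * gp \<theta> i)"
    by (auto simp: gp_def fun_eq_iff power_add)
  moreover have "(\<lambda>i. (1 - \<theta>) ^ t * gp \<theta> i) sums ((1 - \<theta>) ^ t * 1)"
    using gp_has_sum[OF th] by (intro sums_mult has_sum_imp_sums)
  ultimately have "(\<lambda>i. gp \<theta> (i + t) * (if t \<le> i + t then 1 else 0)) sums ((1 - \<theta>) ^ t)"
    by simp
  then have "(\<lambda>m. gp \<theta> m * (if t \<le> m then 1 else 0)) sums ((1 - \<theta>) ^ t + (\<Sum>i<t. gp \<theta> i * (if t \<le> i then 1 else 0)))"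
    by (rule sums_iff_shift[THEN iffD1])
  then have "(\<lambda>m. gp \<theta> m * (if t \<le> m then 1 else 0)) sums ((1 - \<theta>) ^ t)"
    by simp
  then have "((\<lambda>m. gp \<theta> m * (if t \<le> m then 1 else 0)) has_sum (1 - \<theta>) ^ t) UNIV"
    by (rule sums_nonneg_imp_has_sum) (use gp_nonneg[OF th] in auto)
  then show ?thesis by (simp add: has_sum_iff)
qed

lemma tail_sum:
  "(\<Sum>\<^sub>\<infinity>m. gp \<theta> m * lk p q h k m * (if length h \<le> m then 1 else 0))
     = lk p q h k (length h) * (1 - \<theta>) ^ length h"
proof -
  have "(\<Sum>\<^sub>\<infinity>m. gp \<theta> m * lk p q h k m * (if length h \<le> m then 1 else 0))
      = (\<Sum>\<^sub>\<infinity>m. lk p q h k (length h) * (gp \<theta> m * (if length h \<le> m then 1 else 0)))"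
  proof (rule infsum_cong)
    fix m show "gp \<theta> m * lk p q h k m * (if length h \<le> m then 1 else 0) =
      lk p q h k (length h) * (gp \<theta> m * (if length h \<le> m then 1 else 0))"
    proof (cases "length h \<le> m")
      case True
      then have "lk p q h k m = lk p q h k (length h)" by (metis lk_min min.absorb2)
      then show ?thesis using True by simp
    qed simp
  qed
  also have "\<dots> = lk p q h k (length h) * (1 - \<theta>) ^ length h"
    by (simp add: infsum_cmult_right' geo_tail)
  finally show ?thesis .
qed

lemma As_Ns:
  assumes "nnh p q h"
  shows "As \<theta> p q h k = Ns \<theta> p q h k + \<theta> * (Zs \<theta> p q h k - Ns \<theta> p q h k)"
proof -
  let ?f = "\<lambda>m. gp \<theta> m * lk p q h k m"
  let ?t = "length h"
  have sZ: "Zs \<theta> p q h k = Ns \<theta> p q h k + (\<Sum>\<^sub>\<infinity>m. ?f m * (if ?t \<le> m then 1 else 0))"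
  proof -
    have "Zs \<theta> p q h k = (\<Sum>\<^sub>\<infinity>m. ?f m * (if m < ?t then 1 else 0) + ?f m * (if ?t \<le> m then 1 else 0))"
      unfolding Zs_def by (rule infsum_cong) auto
    also have "\<dots> = Ns \<theta> p q h k + (\<Sum>\<^sub>\<infinity>m. ?f m * (if ?t \<le> m then 1 else 0))"
      unfolding Ns_def by (rule infsum_add; rule sm01[OF assms]) auto
    finally show ?thesis .
  qed
  have sA: "As \<theta> p q h k = Ns \<theta> p q h k + gp \<theta> ?t * lk p q h k ?t"
  proof -
    have "As \<theta> p q h k = (\<Sum>\<^sub>\<infinity>m. ?f m * (if m < ?t then 1 else 0) + (if m = ?t then gp \<theta> ?t * lk p q h k ?t else 0))"
      unfolding As_def by (rule infsum_cong) auto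
    also have "\<dots> = Ns \<theta> p q h k + (\<Sum>\<^sub>\<infinity>m. (if m = ?t then gp \<theta> ?t * lk p q h k ?t else 0))"
      unfolding Ns_def
    proof (rule infsum_add)
      show "(\<lambda>m. ?f m * (if m < ?t then 1 else 0)) summable_on UNIV" by (rule sm01[OF assms]) auto
      have "(\<lambda>m. if m = ?t then gp \<theta> ?t * lk p q h k ?t else 0) summable_on {?t}" by simp
      then show "(\<lambda>m. if m = ?t then gp \<theta> ?t * lk p q h k ?t else 0) summable_on UNIV"
        by (subst summable_on_cong_neutral[where T="{?t}"]) auto
    qed
    finally show ?thesis by (simp add: infsum_single_nat)
  qed
  show ?thesis using sZ sA tail_sum[of p q h k] by (simp add: gp_def algebra_simps)
qed


lemma Zs_split:
  assumes "nnh p q h"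
  shows "Zs \<theta> p q h k = As \<theta> p q h k + (\<Sum>\<^sub>\<infinity>m. gp \<theta> m * lk p q h k m * (if length h < m then 1 else 0))"
proof -
  let ?f = "\<lambda>m. gp \<theta> m * lk p q h k m"
  have "Zs \<theta> p q h k = (\<Sum>\<^sub>\<infinity>m. ?f m * (if m \<le> length h then 1 else 0) + ?f m * (if length h < m then 1 else 0))"
    unfolding Zs_def by (rule infsum_cong) auto
  also have "\<dots> = As \<theta> p q h k + (\<Sum>\<^sub>\<infinity>m. ?f m * (if length h < m then 1 else 0))"
    unfolding As_def by (rule infsum_add; rule sm01[OF assms]) auto
  finally show ?thesis .
qed

lemma Zs_step:
  assumes "nnh p q h" "k \<in> S"
  shows "Zs \<theta> p q (h @ [(S, x')]) k = q (x' k) * As \<theta> p q h k + p (x' k) * (Zs \<theta> p q h k - As \<theta> p q h k)"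
proof -
  let ?f = "\<lambda>m. gp \<theta> m * lk p q h k m"
  have "Zs \<theta> p q (h @ [(S, x')]) k = (\<Sum>\<^sub>\<infinity>m. q (x' k) * (?f m * (if m \<le> length h then 1 else 0)) + p (x' k) * (?f m * (if length h < m then 1 else 0)))"
    unfolding Zs_def lk_step using assms(2) by (intro infsum_cong) (auto simp: obs_dens_def)
  also have "\<dots> = q (x' k) * As \<theta> p q h k + p (x' k) * (\<Sum>\<^sub>\<infinity>m. ?f m * (if length h < m then 1 else 0))"
    unfolding As_def
    by (subst infsum_add) (auto simp: infsum_cmult_right' intro!: summable_on_cmult_right sm01[OF assms(1)])
  finally show ?thesis using Zs_split[OF assms(1), of k] by simp
qed

lemma Zs_step_notin:
  assumes "k \<notin> S"
  shows "Zs \<theta> p q (h @ [(S, x')]) k = Zs \<theta> p q h k"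
  unfolding Zs_def lk_step using assms by simp

lemma Ns_step:
  assumes "nnh p q h" "k \<in> S"
  shows "Ns \<theta> p q (h @ [(S, x')]) k = q (x' k) * As \<theta> p q h k"
proof -
  have "Ns \<theta> p q (h @ [(S, x')]) k = (\<Sum>\<^sub>\<infinity>m. q (x' k) * (gp \<theta> m * lk p q h k m * (if m \<le> length h then 1 else 0)))"
    unfolding Ns_def lk_step using assms(2) by (intro infsum_cong) (auto simp: obs_dens_def)
  then show ?thesis unfolding As_def by (simp add: infsum_cmult_right')
qed

lemma Ns_le_Zs:
  assumes "nnh p q h"
  shows "0 \<le> Ns \<theta> p q h k" "Ns \<theta> p q h k \<le> Zs \<theta> p q h k"
proof -
  have nn: "0 \<le> gp \<theta> m * lk p q h k m" for m by (intro mult_nonneg_nonneg lk_nonneg gp_nonneg[OF th] assms)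
  show "0 \<le> Ns \<theta> p q h k" unfolding Ns_def using nn by (intro infsum_nonneg) simp
  show "Ns \<theta> p q h k \<le> Zs \<theta> p q h k" unfolding Ns_def Zs_def
    using nn by (intro infsum_mono sm01[OF assms] summable_lkc[OF th assms, of "\<lambda>_. 1", simplified]) auto
qed

definition "\<pi>s p q h k = As \<theta> p q h k / Zs \<theta> p q h k"

lemma Zs_pos:
  assumes "wfh K h" "nnh p q h" "mdens \<theta> K p q h \<noteq> 0" "k \<in> {1..K}"
  shows "Zs \<theta> p q h k > 0"
proof -
  have "Zs \<theta> p q h k \<noteq> 0" using assms mdens_factor[OF th assms(1,2)] by auto
  then show ?thesis using Zs_nonneg[OF th assms(2)] by (simp add: order_less_le)
qed

lemma \<pi>s_W:
  assumes "wfh K h" "nnh p q h" "mdens \<theta> K p q h \<noteq> 0" "k \<in> {1..K}"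
  shows "\<pi>s p q h k = Wpost \<theta> K p q h k + \<theta> * (1 - Wpost \<theta> K p q h k)"
    and "0 \<le> Wpost \<theta> K p q h k" "Wpost \<theta> K p q h k \<le> 1"
proof -
  have Z: "Zs \<theta> p q h k > 0" by (rule Zs_pos[OF assms])
  have W: "Wpost \<theta> K p q h k = Ns \<theta> p q h k / Zs \<theta> p q h k" by (rule Wpost_formula[OF th assms(1,2,4,3)])
  show "\<pi>s p q h k = Wpost \<theta> K p q h k + \<theta> * (1 - Wpost \<theta> K p q h k)"
    unfolding \<pi>s_def W As_Ns[OF assms(2)] using Z by (simp add: field_simps)
  show "0 \<le> Wpost \<theta> K p q h k" "Wpost \<theta> K p q h k \<le> 1"
    unfolding W using Z Ns_le_Zs[OF assms(2), of k] by auto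
qed

lemma Zs_step_mix:
  assumes "wfh K h" "nnh p q h" "mdens \<theta> K p q h \<noteq> 0" "k \<in> {1..K}" "k \<in> S"
  shows "Zs \<theta> p q (h @ [(S, x')]) k = Zs \<theta> p q h k * mixd p q (\<pi>s p q h k) (x' k)"
  unfolding Zs_step[OF assms(2,5)] mixd_def \<pi>s_def using Zs_pos[OF assms(1-4)]
  by (simp add: field_simps)

lemma mdens_step:
  assumes "wfh K h" "nnh p q h" "mdens \<theta> K p q h \<noteq> 0" "S \<subseteq> {1..K}"
    and "\<forall>k\<in>S. p (x' k) \<ge> 0 \<and> q (x' k) \<ge> 0"
  shows "mdens \<theta> K p q (h @ [(S, x')]) = mdens \<theta> K p q h * (\<Prod>k\<in>S. mixd p q (\<pi>s p q h k) (x' k))"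
proof -
  have "mdens \<theta> K p q (h @ [(S, x')]) = (\<Prod>k\<in>{1..K}. Zs \<theta> p q (h @ [(S, x')]) k)"
    by (rule mdens_factor[OF th wfh_step[OF assms(1,4)] nnh_step[OF assms(2,5)]])
  also have "\<dots> = (\<Prod>k\<in>{1..K}. Zs \<theta> p q h k * (if k \<in> S then mixd p q (\<pi>s p q h k) (x' k) else 1))"
    by (intro prod.cong refl) (auto simp: Zs_step_mix[OF assms(1-3)] Zs_step_notin)
  also have "\<dots> = mdens \<theta> K p q h * (\<Prod>k\<in>{1..K}. if k \<in> S then mixd p q (\<pi>s p q h k) (x' k) else 1)"
    by (simp add: prod.distrib mdens_factor[OF th assms(1,2)])
  also have "(\<Prod>k\<in>{1..K}. if k \<in> S then mixd p q (\<pi>s p q h k) (x' k) else 1) = (\<Prod>k\<in>S. mixd p q (\<pi>s p q h k) (x' k))"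
    using prod.inter_restrict[OF finite_atLeastAtMost, of "\<lambda>k. mixd p q (\<pi>s p q h k) (x' k)" 1 K S] assms(4)
    by (simp add: Int_absorb1 Int_absorb2)
  finally show ?thesis .
qed

lemma Wpost_step:
  assumes "wfh K h" "nnh p q h" "mdens \<theta> K p q h \<noteq> 0" "S \<subseteq> {1..K}"
    and "\<forall>k\<in>S. p (x' k) \<ge> 0 \<and> q (x' k) \<ge> 0" and "k \<in> S"
  shows "Wpost \<theta> K p q (h @ [(S, x')]) k =
     (if mdens \<theta> K p q (h @ [(S, x')]) = 0 then 0 else post p q (\<pi>s p q h k) (x' k))"
proof (cases "mdens \<theta> K p q (h @ [(S, x')]) = 0")
  case True
  then show ?thesis unfolding Wpost_def cexp_def by simp
next
  case False
  have k: "k \<in> {1..K}" using assms by auto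
  have Z: "Zs \<theta> p q h k > 0" by (rule Zs_pos[OF assms(1-3) k])
  have "Wpost \<theta> K p q (h @ [(S, x')]) k = Ns \<theta> p q (h @ [(S, x')]) k / Zs \<theta> p q (h @ [(S, x')]) k"
    by (rule Wpost_formula[OF th wfh_step[OF assms(1,4)] nnh_step[OF assms(2,5)] k False])
  also have "\<dots> = post p q (\<pi>s p q h k) (x' k)"
  proof -
    have den: "\<pi>s p q h k * q (x' k) + (1 - \<pi>s p q h k) * p (x' k)
        = (q (x' k) * As \<theta> p q h k + p (x' k) * (Zs \<theta> p q h k - As \<theta> p q h k)) / Zs \<theta> p q h k"
      unfolding \<pi>s_def using Z by (simp add: field_simps)
    have "post p q (\<pi>s p q h k) (x' k) = (As \<theta> p q h k / Zs \<theta> p q h k * q (x' k)) /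
        ((q (x' k) * As \<theta> p q h k + p (x' k) * (Zs \<theta> p q h k - As \<theta> p q h k)) / Zs \<theta> p q h k)"
      unfolding post_def mixd_def den by (simp add: \<pi>s_def)
    also have "\<dots> = q (x' k) * As \<theta> p q h k / (q (x' k) * As \<theta> p q h k + p (x' k) * (Zs \<theta> p q h k - As \<theta> p q h k))"
      using Z by (simp add: field_simps)
    finally show ?thesis unfolding Ns_step[OF assms(2,6)] Zs_step[OF assms(2,6)] by simp
  qed
  finally show ?thesis using False by simp
qed

lemma LFNR_avg:
  assumes "wfh K h" "nnh p q h" "B \<subseteq> {1..K}"
  shows "cexp \<theta> K p q h (FNP (length h) B) = (\<Sum>k\<in>B. Wpost \<theta> K p q h k) / real (max (card B) 1)"
proof -
  have fB: "finite B" using assms(3) finite_subset by blast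
  let ?c = "real (max (card B) 1)"
  let ?X = "\<lambda>\<tau>. \<Sum>k\<in>B. prior \<theta> K \<tau> * lik p q h \<tau> * (if \<tau> k < length h then 1 else 0)"
  have "(\<Sum>\<^sub>\<infinity>\<tau>\<in>Tau K. prior \<theta> K \<tau> * lik p q h \<tau> * FNP (length h) B \<tau>)
      = (\<Sum>\<^sub>\<infinity>\<tau>\<in>Tau K. ?X \<tau> * inverse ?c)"
    unfolding FNP_def by (intro infsum_cong) (simp add: sum_distrib_left divide_inverse mult.assoc)
  also have "\<dots> = (\<Sum>\<^sub>\<infinity>\<tau>\<in>Tau K. ?X \<tau>) * inverse ?c"
    by (rule infsum_cmult_left')
  also have "(\<Sum>\<^sub>\<infinity>\<tau>\<in>Tau K. ?X \<tau>) = (\<Sum>k\<in>B. \<Sum>\<^sub>\<infinity>\<tau>\<in>Tau K. prior \<theta> K \<tau> * lik p q h \<tau> * (if \<tau> k < length h then 1 else 0))"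
    using assms(3) by (intro infsum_finite_sum(1)[OF fB] summable_ind[OF th assms(1,2)]) auto
  finally have eq: "(\<Sum>\<^sub>\<infinity>\<tau>\<in>Tau K. prior \<theta> K \<tau> * lik p q h \<tau> * FNP (length h) B \<tau>) =
     (\<Sum>k\<in>B. \<Sum>\<^sub>\<infinity>\<tau>\<in>Tau K. prior \<theta> K \<tau> * lik p q h \<tau> * (if \<tau> k < length h then 1 else 0)) * inverse ?c" .
  show ?thesis
    unfolding cexp_def Wpost_def eq by (simp only: sum_divide_distrib[symmetric] divide_inverse mult_ac sum_distrib_left)
qed

end


datatype wk = WK real nat

instantiation wk :: linorder
begin
fun less_eq_wk :: "wk \<Rightarrow> wk \<Rightarrow> bool" where
  "less_eq_wk (WK a i) (WK b j) \<longleftrightarrow> a < b \<or> (a = b \<and> i \<le> j)"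
fun less_wk :: "wk \<Rightarrow> wk \<Rightarrow> bool" where
  "less_wk (WK a i) (WK b j) \<longleftrightarrow> a < b \<or> (a = b \<and> i < j)"
instance
proof
  fix x y z :: wk
  show "(x < y) = (x \<le> y \<and> \<not> y \<le> x)" by (cases x; cases y) auto
  show "x \<le> x" by (cases x) auto
  show "x \<le> y \<Longrightarrow> y \<le> z \<Longrightarrow> x \<le> z" by (cases x; cases y; cases z) auto
  show "x \<le> y \<Longrightarrow> y \<le> x \<Longrightarrow> x = y" by (cases x; cases y) auto
  show "x \<le> y \<or> y \<le> x" by (cases x; cases y) auto
qed
end

lemma sorted_nth_le_iff:
  fixes ys :: "real list"
  assumes "sorted ys" "i < length ys"
  shows "ys ! i \<le> c \<longleftrightarrow> i < length (filter (\<lambda>x. x \<le> c) ys)"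
  using assms
proof (induction ys arbitrary: i)
  case (Cons y ys)
  show ?case
  proof (cases "y \<le> c")
    case True
    then show ?thesis using Cons by (cases i) auto
  next
    case False
    have "\<forall>x\<in>set ys. y \<le> x" using Cons.prems by simp
    then have f: "filter (\<lambda>x. x \<le> c) ys = []" using False by (auto simp: filter_empty_conv)
    have "y \<le> (y # ys) ! i"
      using Cons.prems by (cases i) (auto)
    then show ?thesis using False f by auto
  qed
qed simp

lemma sort_nth_le_iff:
  fixes xs :: "real list"
  assumes "i < length xs"
  shows "sort xs ! i \<le> c \<longleftrightarrow> i < length (filter (\<lambda>x. x \<le> c) xs)"
proof -
  have "sort xs ! i \<le> c \<longleftrightarrow> i < length (filter (\<lambda>x. x \<le> c) (sort xs))"
    by (rule sorted_nth_le_iff) (use assms in auto)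
  also have "length (filter (\<lambda>x. x \<le> c) (sort xs)) = length (filter (\<lambda>x. x \<le> c) xs)"
    by (simp add: filter_sort)
  finally show ?thesis .
qed

lemma cnt_map_set:
  fixes Y :: "'a::linorder \<Rightarrow> real"
  assumes "finite C"
  shows "length (filter (\<lambda>x. x \<le> c) (map Y (sorted_list_of_set C))) = card {x\<in>C. Y x \<le> c}"
proof -
  have "length (filter (\<lambda>x. x \<le> c) (map Y (sorted_list_of_set C)))
      = length (filter (\<lambda>x. Y x \<le> c) (sorted_list_of_set C))"
    by (simp add: filter_map o_def)
  also have "\<dots> = card (set (filter (\<lambda>x. Y x \<le> c) (sorted_list_of_set C)))"
    by (rule distinct_card[symmetric]) simp
  also have "\<dots> = card {x\<in>C. Y x \<le> c}"
    using assms by (simp add: set_filter)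
  finally show ?thesis .
qed

lemma dom_sort:
  fixes Y :: "'a::linorder \<Rightarrow> real" and Z :: "'b::linorder \<Rightarrow> real"
  assumes fB: "finite B" and fC: "finite C" and inj: "inj_on \<phi> B" and im: "\<phi> ` B \<subseteq> C"
    and le: "\<And>b. b \<in> B \<Longrightarrow> Y (\<phi> b) \<le> Z b"
  shows "preceq (sort (map Y (sorted_list_of_set C))) (sort (map Z (sorted_list_of_set B)))"
  unfolding preceq_def
proof (intro conjI allI impI)
  have "card B \<le> card C" using card_inj_on_le[OF inj im fC] .
  then show "length (sort (map Z (sorted_list_of_set B))) \<le> length (sort (map Y (sorted_list_of_set C)))"
    using fB fC by simp
  fix i assume i: "i < length (sort (map Z (sorted_list_of_set B)))"
  then have iB: "i < card B" using fB by simp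
  define c where "c = sort (map Z (sorted_list_of_set B)) ! i"
  have "i < card {b\<in>B. Z b \<le> c}"
    using sort_nth_le_iff[of i "map Z (sorted_list_of_set B)" c] iB fB
    unfolding cnt_map_set[OF fB] by (simp add: c_def)
  also have "card {b\<in>B. Z b \<le> c} \<le> card {x\<in>C. Y x \<le> c}"
  proof (rule card_inj_on_le[where f=\<phi>])
    show "inj_on \<phi> {b \<in> B. Z b \<le> c}" using inj by (rule inj_on_subset) auto
    show "\<phi> ` {b \<in> B. Z b \<le> c} \<subseteq> {x \<in> C. Y x \<le> c}" using im le by (force intro: order_trans)
    show "finite {x \<in> C. Y x \<le> c}" using fC by simp
  qed
  finally have "i < card {x\<in>C. Y x \<le> c}" .
  moreover have "i < length (map Y (sorted_list_of_set C))"
    using iB \<open>card B \<le> card C\<close> fC by simp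
  ultimately show "sort (map Y (sorted_list_of_set C)) ! i \<le> sort (map Z (sorted_list_of_set B)) ! i"
    using sort_nth_le_iff[of i "map Y (sorted_list_of_set C)" c] unfolding cnt_map_set[OF fC] c_def by simp
qed

definition ordR :: "(nat \<Rightarrow> real) \<Rightarrow> nat \<Rightarrow> nat \<Rightarrow> bool" where
  "ordR W i j \<longleftrightarrow> W i < W j \<or> (W i = W j \<and> i < j)"

lemma ordR_eq: "ordR W = (\<lambda>i j. W i < W j \<or> (W i = W j \<and> i < j))"
  by (auto simp: ordR_def fun_eq_iff)

lemma ordR_key: "ordR W i j \<longleftrightarrow> WK (W i) i < WK (W j) j"
  unfolding ordR_def by auto

lemma order_by_ex1:
  assumes "finite S"
  shows "\<exists>!ks. distinct ks \<and> set ks = S \<and> sorted_wrt (ordR W) ks"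
proof -
  let ?key = "\<lambda>i::nat. WK (W i) i"
  have inj: "inj_on ?key A" for A by (auto simp: inj_on_def)
  define ks0 where "ks0 = sort_key ?key (sorted_list_of_set S)"
  have d0: "distinct ks0" "set ks0 = S" using assms by (auto simp: ks0_def)
  have "sorted (map ?key ks0)" unfolding ks0_def by (rule sorted_sort_key)
  moreover have "distinct (map ?key ks0)" using d0 inj by (simp add: distinct_map)
  ultimately have "sorted_wrt (<) (map ?key ks0)" by (simp add: strict_sorted_iff)
  then have s0: "sorted_wrt (ordR W) ks0" by (simp add: sorted_wrt_map ordR_eq)
  show ?thesis
  proof (rule ex1I[of _ ks0])
    show "distinct ks0 \<and> set ks0 = S \<and> sorted_wrt (ordR W) ks0" using d0 s0 by simp
    fix ks assume a: "distinct ks \<and> set ks = S \<and> sorted_wrt (ordR W) ks"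
    then have "sorted_wrt (<) (map ?key ks)" by (simp add: sorted_wrt_map ordR_eq)
    then have "sorted (map ?key ks)" "distinct (map ?key ks)" by (simp_all add: strict_sorted_iff)
    moreover have "sorted (map ?key ks0)" "distinct (map ?key ks0)"
      using \<open>sorted_wrt (<) (map ?key ks0)\<close> by (simp_all add: strict_sorted_iff)
    moreover have "set (map ?key ks) = set (map ?key ks0)" using a d0 by simp
    ultimately have "map ?key ks = map ?key ks0" using sorted_distinct_set_unique by blast
    then show "ks = ks0" using inj_on_map_eq_map[OF inj] by blast
  qed
qed

lemma order_by_props:
  assumes "finite S"
  shows "distinct (order_by W S)" "set (order_by W S) = S" "sorted_wrt (ordR W) (order_by W S)"
proof -
  have "distinct (order_by W S) \<and> set (order_by W S) = S \<and> sorted_wrt (ordR W) (order_by W S)"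
  proof -
    have eq: "(\<lambda>i j. W i < W j \<or> (W i = W j \<and> i < j)) = ordR W" by (auto simp: ordR_def fun_eq_iff)
    show ?thesis unfolding order_by_def eq by (rule theI'[OF order_by_ex1[OF assms]])
  qed
  then show "distinct (order_by W S)" "set (order_by W S) = S" "sorted_wrt (ordR W) (order_by W S)" by auto
qed


lemma sort_map_ordR:
  assumes "finite S"
  shows "map W (order_by W S) = sort (map W (sorted_list_of_set S))"
proof -
  note op = order_by_props[OF assms, of W]
  have "sorted_wrt (\<le>) (map W (order_by W S))"
    unfolding sorted_wrt_map by (rule sorted_wrt_mono_rel[OF _ op(3)]) (auto simp: ordR_def)
  moreover have "mset (order_by W S) = mset (sorted_list_of_set S)"
    using op assms by (subst set_eq_iff_mset_eq_distinct[symmetric]) auto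
  ultimately show ?thesis
    by (intro properties_for_sort[symmetric]) (simp_all add: sorted_wrt_iff_nth_less sorted_iff_nth_mono)
qed

lemma sort_map_key:
  "map W (sort_key W xs) = sort (map W xs)"
  by (rule properties_for_sort[symmetric]) simp_all

lemma onestep_sub: "finite S \<Longrightarrow> onestep \<alpha> S W \<subseteq> S"
  unfolding onestep_def Let_def using order_by_props(2) set_take_subset by metis

lemma onestep_dom:
  fixes W :: "nat \<Rightarrow> real"
  assumes fS: "finite S" and BS: "B \<subseteq> S" and avg: "(\<Sum>k\<in>B. W k) / real (max (card B) 1) \<le> \<alpha>"
    and a0: "0 \<le> \<alpha>"
  shows "\<exists>\<phi>. inj_on \<phi> B \<and> \<phi> ` B \<subseteq> onestep \<alpha> S W \<and> (\<forall>b\<in>B. W (\<phi> b) \<le> W b)"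
proof -
  have fB: "finite B" using fS BS finite_subset by blast
  define ks where "ks = order_by W S"
  define m where "m = card B"
  define bs where "bs = sort_key W (sorted_list_of_set B)"
  note op = order_by_props[OF fS, of W, folded ks_def]
  have lks: "length ks = card S" using op distinct_card by metis
  have dbs: "distinct bs" "set bs = B" "length bs = m" using fB by (auto simp: bs_def m_def)
  have dom: "preceq (sort (map W (sorted_list_of_set S))) (sort (map W (sorted_list_of_set B)))"
    by (rule dom_sort[where \<phi>=id]) (use fB fS BS in auto)
  have ws: "map W ks = sort (map W (sorted_list_of_set S))" unfolding ks_def by (rule sort_map_ordR[OF fS])
  have wb: "map W bs = sort (map W (sorted_list_of_set B))" unfolding bs_def by (rule sort_map_key)
  have mle: "m \<le> length ks" using dom unfolding preceq_def ws[symmetric] wb[symmetric] using dbs by simp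
  have le_i: "W (ks ! i) \<le> W (bs ! i)" if "i < m" for i
    using dom that mle dbs unfolding preceq_def ws[symmetric] wb[symmetric] by auto
  have sum_le: "(\<Sum>i<m. W (ks ! i)) \<le> (\<Sum>k\<in>B. W k)"
  proof -
    have "(\<Sum>i<m. W (ks ! i)) \<le> (\<Sum>i<m. W (bs ! i))" by (intro sum_mono le_i) auto
    also have "(\<Sum>i<m. W (bs ! i)) = sum_list (map W bs)"
      using dbs by (simp add: sum_list_sum_nth atLeast0LessThan)
    also have "\<dots> = (\<Sum>k\<in>B. W k)" using dbs by (simp add: sum_list_distinct_conv_sum_set)
    finally show ?thesis .
  qed
  let ?P = "\<lambda>n. n \<le> length ks \<and> R_avg W ks n \<le> \<alpha>"
  define n where "n = (GREATEST n. ?P n)"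
  have Pm: "?P m"
  proof (cases "m = 0")
    case True then show ?thesis using a0 by (simp add: R_avg_def)
  next
    case False
    have mx: "max (card B) 1 = m" using False by (simp add: m_def)
    have "R_avg W ks m \<le> (\<Sum>k\<in>B. W k) / real m"
      using sum_le False by (simp add: R_avg_def divide_right_mono)
    also have "(\<Sum>k\<in>B. W k) / real m \<le> \<alpha>" using avg mx by simp
    finally show ?thesis using mle by simp
  qed
  have mn: "m \<le> n" unfolding n_def by (rule Greatest_le_nat[of ?P m "length ks"]) (use Pm in auto)
  have nl: "n \<le> length ks" unfolding n_def by (rule conjunct1[OF GreatestI_nat[of ?P m "length ks"]]) (use Pm in auto)
  have os: "onestep \<alpha> S W = set (take n ks)"
    unfolding onestep_def Let_def ks_def[symmetric] n_def ..
  have bij: "bij_betw ((!) bs) {..<m} B" by (rule bij_betw_nth) (use dbs in auto)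
  define \<phi> where "\<phi> b = ks ! (inv_into {..<m} ((!) bs) b)" for b
  have ib: "bij_betw (inv_into {..<m} ((!) bs)) B {..<m}" by (rule bij_betw_inv_into[OF bij])
  show ?thesis
  proof (intro exI[of _ \<phi>] conjI ballI)
    show "inj_on \<phi> B"
    proof (rule inj_onI)
      fix a b assume ab: "a \<in> B" "b \<in> B" "\<phi> a = \<phi> b"
      have "inv_into {..<m} ((!) bs) a < m" "inv_into {..<m} ((!) bs) b < m"
        using ib ab by (auto simp: bij_betw_def)
      then have "inv_into {..<m} ((!) bs) a = inv_into {..<m} ((!) bs) b"
        using ab(3) op(1) mle nth_eq_iff_index_eq unfolding \<phi>_def by (metis order_less_le_trans)
      then show "a = b" using ib ab by (metis bij_betw_inv_into_right[OF bij])
    qed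
    show "\<phi> ` B \<subseteq> onestep \<alpha> S W"
    proof
      fix c assume "c \<in> \<phi> ` B"
      then obtain b where b: "b \<in> B" "c = \<phi> b" by auto
      have i: "inv_into {..<m} ((!) bs) b < m" using ib b by (auto simp: bij_betw_def)
      then have "inv_into {..<m} ((!) bs) b < length (take n ks)" using mn nl by simp
      then have "take n ks ! inv_into {..<m} ((!) bs) b \<in> set (take n ks)" by (rule nth_mem)
      then show "c \<in> onestep \<alpha> S W" unfolding os b \<phi>_def using i mn by simp
    qed
    fix b assume b: "b \<in> B"
    have i: "inv_into {..<m} ((!) bs) b < m" using ib b by (auto simp: bij_betw_def)
    have "W (\<phi> b) \<le> W (bs ! inv_into {..<m} ((!) bs) b)" unfolding \<phi>_def by (rule le_i[OF i])
    also have "bs ! inv_into {..<m} ((!) bs) b = b" by (rule bij_betw_inv_into_right[OF bij b])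
    finally show "W (\<phi> b) \<le> W b" .
  qed
qed


locale mpq =
  fixes M :: "'x measure" and p q :: "'x \<Rightarrow> real"
  assumes sf: "sigma_finite_measure M"
    and pm[measurable]: "p \<in> borel_measurable M" and qm[measurable]: "q \<in> borel_measurable M"
    and pnn: "\<forall>x\<in>space M. p x \<ge> 0" and qnn: "\<forall>x\<in>space M. q x \<ge> 0"
    and pint: "(\<integral>\<^sup>+x. ennreal (p x) \<partial>M) = 1" and qint: "(\<integral>\<^sup>+x. ennreal (q x) \<partial>M) = 1"
begin

lemma p_integrable: "integrable M p" and p_int: "integral\<^sup>L M p = 1"
  using nn_integral_eq_integrable[of p M 1] pint pnn by (auto intro: AE_I2)

lemma q_integrable: "integrable M q" and q_int: "integral\<^sup>L M q = 1"
  using nn_integral_eq_integrable[of q M 1] qint qnn by (auto intro: AE_I2)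

lemma dens_measure:
  fixes f :: "'x \<Rightarrow> real"
  assumes f[measurable]: "f \<in> borel_measurable M" and nn: "\<forall>x\<in>space M. f x \<ge> 0" and int: "integrable M f"
    and A[measurable]: "A \<in> sets M"
  shows "measure (density M (\<lambda>x. ennreal (f x))) A = (LINT x|M. f x * indicator A x)"
proof -
  have "emeasure (density M (\<lambda>x. ennreal (f x))) A = (\<integral>\<^sup>+ x. ennreal (f x) * indicator A x \<partial>M)"
    by (rule emeasure_density) auto
  also have "\<dots> = (\<integral>\<^sup>+ x. ennreal (f x * indicator A x) \<partial>M)"
    by (intro nn_integral_cong) (auto split: split_indicator)
  also have "\<dots> = ennreal (LINT x|M. f x * indicator A x)"
    using nn by (intro nn_integral_eq_integral integrable_real_mult_indicator int A AE_I2) (auto split: split_indicator)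
  finally show ?thesis
    using nn by (simp add: measure_def integral_nonneg_AE AE_I2 split: split_indicator)
qed

definition "mixM \<pi> = density M (\<lambda>x. ennreal (mixd p q \<pi> x))"

lemma mixd_measurable[measurable]: "mixd p q \<pi> \<in> borel_measurable M"
  unfolding mixd_def[abs_def] by measurable

lemma post_measurable[measurable]: "post p q \<pi> \<in> borel_measurable M"
  unfolding post_def[abs_def] by measurable

lemma mixd_nonneg: "0 \<le> \<pi> \<Longrightarrow> \<pi> \<le> 1 \<Longrightarrow> x \<in> space M \<Longrightarrow> mixd p q \<pi> x \<ge> 0"
  unfolding mixd_def using pnn qnn by (simp add: add_nonneg_nonneg)

lemma mixd_integrable: "integrable M (mixd p q \<pi>)"
  unfolding mixd_def[abs_def] using p_integrable q_integrable by simp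

lemma mix_measure:
  assumes "0 \<le> \<pi>" "\<pi> \<le> 1" "A \<in> sets M"
  shows "measure (mixM \<pi>) A = \<pi> * (LINT x|M. q x * indicator A x) + (1 - \<pi>) * (LINT x|M. p x * indicator A x)"
proof -
  have "measure (mixM \<pi>) A = (LINT x|M. mixd p q \<pi> x * indicator A x)"
    unfolding mixM_def using assms mixd_nonneg by (intro dens_measure mixd_integrable) auto
  also have "\<dots> = (LINT x|M. \<pi> * (q x * indicator A x) + (1 - \<pi>) * (p x * indicator A x))"
    by (intro Bochner_Integration.integral_cong) (auto simp: mixd_def algebra_simps)
  also have "\<dots> = \<pi> * (LINT x|M. q x * indicator A x) + (1 - \<pi>) * (LINT x|M. p x * indicator A x)"
    using assms p_integrable q_integrable
    by (subst Bochner_Integration.integral_add) (auto intro!: integrable_real_mult_indicator)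
  finally show ?thesis .
qed

lemma prob_mixM:
  assumes "0 \<le> \<pi>" "\<pi> \<le> 1"
  shows "prob_space (mixM \<pi>)"
proof (rule prob_spaceI)
  have sp: "space (mixM \<pi>) = space M" by (simp add: mixM_def)
  have "emeasure (mixM \<pi>) (space (mixM \<pi>)) = (\<integral>\<^sup>+ x. ennreal (mixd p q \<pi> x) * indicator (space M) x \<partial>M)"
    unfolding sp unfolding mixM_def by (rule emeasure_density) auto
  also have "\<dots> = (\<integral>\<^sup>+ x. ennreal \<pi> * ennreal (q x) + ennreal (1 - \<pi>) * ennreal (p x) \<partial>M)"
  proof (rule nn_integral_cong)
    fix x assume x: "x \<in> space M"
    have "ennreal (mixd p q \<pi> x) = ennreal (\<pi> * q x) + ennreal ((1 - \<pi>) * p x)"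
      unfolding mixd_def using assms pnn qnn x by (intro ennreal_plus) auto
    also have "\<dots> = ennreal \<pi> * ennreal (q x) + ennreal (1 - \<pi>) * ennreal (p x)"
      using assms pnn qnn x by (simp add: ennreal_mult)
    finally show "ennreal (mixd p q \<pi> x) * indicator (space M) x = ennreal \<pi> * ennreal (q x) + ennreal (1 - \<pi>) * ennreal (p x)"
      using x by simp
  qed
  also have "\<dots> = ennreal \<pi> * (\<integral>\<^sup>+ x. ennreal (q x) \<partial>M) + ennreal (1 - \<pi>) * (\<integral>\<^sup>+ x. ennreal (p x) \<partial>M)"
    by (subst nn_integral_add) (auto simp: nn_integral_cmult)
  also have "\<dots> = ennreal \<pi> + ennreal (1 - \<pi>)" by (simp add: pint qint)
  also have "\<dots> = ennreal (\<pi> + (1 - \<pi>))" using assms by (intro ennreal_plus[symmetric]) auto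
  finally show "emeasure (mixM \<pi>) (space (mixM \<pi>)) = 1" by simp
qed

lemma post_bounds:
  assumes "0 \<le> \<pi>" "\<pi> \<le> 1" "x \<in> space M"
  shows "0 \<le> post p q \<pi> x" "post p q \<pi> x \<le> 1"
proof -
  have a: "0 \<le> \<pi> * q x" "0 \<le> (1 - \<pi>) * p x" using assms pnn qnn by auto
  then show "0 \<le> post p q \<pi> x" unfolding post_def mixd_def by simp
  show "post p q \<pi> x \<le> 1"
  proof (cases "\<pi> * q x + (1 - \<pi>) * p x = 0")
    case False
    then have "\<pi> * q x + (1 - \<pi>) * p x > 0" using a by linarith
    then show ?thesis unfolding post_def mixd_def using a by (simp add: divide_le_eq)
  qed (simp add: post_def mixd_def)
qed

definition "L \<pi> = distr (mixM \<pi>) borel (post p q \<pi>)"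

lemma post_measurable_mix[measurable]: "post p q \<pi> \<in> borel_measurable (mixM \<pi>)"
  unfolding mixM_def by (subst measurable_cong_sets[OF sets_density refl]) simp

lemma real_distribution_L:
  assumes "0 \<le> \<pi>" "\<pi> \<le> 1"
  shows "real_distribution (L \<pi>)"
proof -
  interpret prob_space "mixM \<pi>" by (rule prob_mixM[OF assms])
  have "prob_space (L \<pi>)" unfolding L_def by (rule prob_space_distr) simp
  then show ?thesis unfolding real_distribution_def real_distribution_axioms_def L_def by simp
qed

lemma post_le_iff:
  assumes "0 \<le> \<pi>" "\<pi> \<le> 1" "x \<in> space M" "0 \<le> c"
  shows "post p q \<pi> x \<le> c \<longleftrightarrow> \<pi> * (1 - c) * q x \<le> c * (1 - \<pi>) * p x"
proof -
  have a: "0 \<le> \<pi> * q x" "0 \<le> (1 - \<pi>) * p x" using assms pnn qnn by auto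
  show ?thesis
  proof (cases "mixd p q \<pi> x = 0")
    case True
    then have "\<pi> * q x = 0" "(1 - \<pi>) * p x = 0" using a unfolding mixd_def by linarith+
    moreover have "\<pi> * (1 - c) * q x = (1 - c) * (\<pi> * q x)" "c * (1 - \<pi>) * p x = c * ((1 - \<pi>) * p x)"
      by (simp_all add: mult_ac)
    ultimately show ?thesis using True assms unfolding post_def by auto
  next
    case False
    then have pos: "mixd p q \<pi> x > 0" using a unfolding mixd_def by auto
    have "post p q \<pi> x \<le> c \<longleftrightarrow> \<pi> * q x \<le> c * mixd p q \<pi> x"
      unfolding post_def using pos by (simp add: divide_le_eq mult.commute)
    also have "\<dots> \<longleftrightarrow> \<pi> * (1 - c) * q x \<le> c * (1 - \<pi>) * p x"
      unfolding mixd_def by (simp add: algebra_simps)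
    finally show ?thesis .
  qed
qed

lemma key_ineq:
  fixes a b :: real
  assumes a0: "0 \<le> a" and b0: "0 \<le> b"
  shows "(LINT x|M. q x * indicator {x\<in>space M. a * q x \<le> b * p x} x)
       \<le> (LINT x|M. p x * indicator {x\<in>space M. a * q x \<le> b * p x} x)"
proof (cases "b < a")
  case True
  show ?thesis
  proof (rule integral_mono)
    show "integrable M (\<lambda>x. q x * indicator {x\<in>space M. a * q x \<le> b * p x} x)"
      by (intro integrable_real_mult_indicator q_integrable) simp
    show "integrable M (\<lambda>x. p x * indicator {x\<in>space M. a * q x \<le> b * p x} x)"
      by (intro integrable_real_mult_indicator p_integrable) simp
    fix x assume x: "x \<in> space M"
    show "q x * indicator {x\<in>space M. a * q x \<le> b * p x} x \<le> p x * indicator {x\<in>space M. a * q x \<le> b * p x} x"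
    proof (cases "a * q x \<le> b * p x")
      case le: True
      have "b * p x \<le> a * p x" using True pnn x by (intro mult_right_mono) auto
      then have "a * q x \<le> a * p x" using le by linarith
      then have "q x \<le> p x" using True b0 by (simp add: mult_le_cancel_left_pos)
      then show ?thesis using x le by simp
    qed (simp add: x)
  qed
next
  case False
  define A where "A = {x\<in>space M. a * q x \<le> b * p x}"
  define D where "D = {x\<in>space M. \<not> a * q x \<le> b * p x}"
  have [measurable]: "A \<in> sets M" "D \<in> sets M" unfolding A_def D_def by measurable
  have split: "\<And>f::'x \<Rightarrow> real. integrable M f \<Longrightarrow> (LINT x|M. f x * indicator A x) + (LINT x|M. f x * indicator D x) = integral\<^sup>L M f"
  proof -
    fix f :: "'x \<Rightarrow> real" assume f: "integrable M f"
    have "(LINT x|M. f x * indicator A x) + (LINT x|M. f x * indicator D x) = (LINT x|M. f x * indicator A x + f x * indicator D x)"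
      using f by (intro Bochner_Integration.integral_add[symmetric] integrable_real_mult_indicator) auto
    also have "\<dots> = integral\<^sup>L M f"
      by (intro Bochner_Integration.integral_cong) (auto simp: A_def D_def split: split_indicator)
    finally show "(LINT x|M. f x * indicator A x) + (LINT x|M. f x * indicator D x) = integral\<^sup>L M f" .
  qed
  have "(LINT x|M. p x * indicator D x) \<le> (LINT x|M. q x * indicator D x)"
  proof (rule integral_mono)
    show "integrable M (\<lambda>x. q x * indicator D x)" by (intro integrable_real_mult_indicator q_integrable) simp
    show "integrable M (\<lambda>x. p x * indicator D x)" by (intro integrable_real_mult_indicator p_integrable) simp
    fix x assume x: "x \<in> space M"
    show "p x * indicator D x \<le> q x * indicator D x"
    proof (cases "a * q x \<le> b * p x")
      case False': False
      have "a * q x \<le> b * q x" using False qnn x by (intro mult_right_mono) auto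
      then have "b * p x < b * q x" using False' by linarith
      then have "p x < q x" using b0 by (metis mult_less_cancel_left_disj not_less)
      then show ?thesis using x False' by (simp add: D_def)
    qed (simp add: D_def)
  qed
  then show ?thesis
    using split[OF p_integrable] split[OF q_integrable] p_int q_int unfolding A_def[symmetric] by linarith
qed

lemma cdf_L: "0 \<le> \<pi> \<Longrightarrow> \<pi> \<le> 1 \<Longrightarrow> cdf (L \<pi>) c = measure (mixM \<pi>) {x\<in>space M. post p q \<pi> x \<le> c}"
  unfolding cdf_def L_def
  by (subst measure_distr) (auto simp: mixM_def intro!: arg_cong[where f="measure _"])

lemma cdf_mono_pi:
  assumes "0 \<le> \<pi>" "\<pi> \<le> \<pi>'" "\<pi>' \<le> 1"
  shows "cdf (L \<pi>') c \<le> cdf (L \<pi>) c"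
proof -
  have p1: "0 \<le> \<pi>'" "\<pi> \<le> 1" using assms by auto
  interpret P: prob_space "mixM \<pi>" by (rule prob_mixM) (use assms in auto)
  interpret P': prob_space "mixM \<pi>'" by (rule prob_mixM) (use assms in auto)
  have spM: "space (mixM r) = space M" "sets (mixM r) = sets M" for r by (simp_all add: mixM_def)
  show ?thesis
  proof (cases "c < 0")
    case True
    have e: "{x\<in>space M. post p q \<pi>' x \<le> c} = {}" using post_bounds[OF p1(1) assms(3)] True by force
    show ?thesis unfolding cdf_L[OF p1(1) assms(3)] cdf_L[OF assms(1) p1(2)] e by simp
  next
    case False
    show ?thesis
    proof (cases "1 \<le> c")
      case True
      have "{x\<in>space M. post p q \<pi> x \<le> c} = space (mixM \<pi>)"
        using post_bounds[OF assms(1) p1(2)] True spM by force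
      then show ?thesis unfolding cdf_L[OF p1(1) assms(3)] cdf_L[OF assms(1) p1(2)]
        using P.prob_space P'.prob_le_1 by simp
    next
      case c1: False
      have c0: "0 \<le> c" using False by simp
      define A where "A = {x\<in>space M. \<pi> * (1 - c) * q x \<le> c * (1 - \<pi>) * p x}"
      define A' where "A' = {x\<in>space M. \<pi>' * (1 - c) * q x \<le> c * (1 - \<pi>') * p x}"
      have [measurable]: "A \<in> sets M" "A' \<in> sets M" unfolding A_def A'_def by measurable
      have eA: "{x\<in>space M. post p q \<pi> x \<le> c} = A" unfolding A_def using post_le_iff[OF assms(1) p1(2) _ c0] by auto
      have eA': "{x\<in>space M. post p q \<pi>' x \<le> c} = A'" unfolding A'_def using post_le_iff[OF p1(1) assms(3) _ c0] by auto
      have sub: "A' \<subseteq> A"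
      proof
        fix x assume "x \<in> A'"
        then have x: "x \<in> space M" and le: "\<pi>' * (1 - c) * q x \<le> c * (1 - \<pi>') * p x" by (auto simp: A'_def)
        have "\<pi> * (1 - c) * q x \<le> \<pi>' * (1 - c) * q x"
          using assms c1 qnn x by (intro mult_right_mono) auto
        moreover have "c * (1 - \<pi>') * p x \<le> c * (1 - \<pi>) * p x"
          using assms c0 pnn x by (intro mult_right_mono mult_left_mono) auto
        ultimately show "x \<in> A" using le x by (auto simp: A_def)
      qed
      have IQ: "(LINT x|M. q x * indicator A' x) \<le> (LINT x|M. p x * indicator A' x)"
        unfolding A'_def using key_ineq[of "\<pi>' * (1 - c)" "c * (1 - \<pi>')"] assms c0 c1 by simp
      have "cdf (L \<pi>') c = \<pi>' * (LINT x|M. q x * indicator A' x) + (1 - \<pi>') * (LINT x|M. p x * indicator A' x)"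
        unfolding cdf_L[OF p1(1) assms(3)] eA' by (rule mix_measure) (use p1 assms in auto)
      also have "\<dots> \<le> \<pi> * (LINT x|M. q x * indicator A' x) + (1 - \<pi>) * (LINT x|M. p x * indicator A' x)"
      proof -
        have "(\<pi>' - \<pi>) * (LINT x|M. q x * indicator A' x) \<le> (\<pi>' - \<pi>) * (LINT x|M. p x * indicator A' x)"
          using IQ assms by (intro mult_left_mono) auto
        then show ?thesis by (simp add: algebra_simps)
      qed
      also have "\<dots> = measure (mixM \<pi>) A'" by (rule mix_measure[symmetric]) (use assms p1 in auto)
      also have "\<dots> \<le> measure (mixM \<pi>) A" by (rule P.finite_measure_mono[OF sub]) (simp add: spM)
      also have "\<dots> = cdf (L \<pi>) c" unfolding cdf_L[OF assms(1) p1(2)] eA ..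
      finally show ?thesis .
    qed
  qed
qed

definition "Fq \<pi> u = Inf {x. u \<le> cdf (L \<pi>) x}"

definition "U01 = restrict_space lborel {0<..<1::real}"

lemma prob_U01: "prob_space U01"
  unfolding U01_def by (auto simp add: emeasure_restrict_space space_restrict_space intro!: prob_spaceI)

lemma space_U01: "space U01 = {0<..<1}"
  unfolding U01_def by (simp add: space_restrict_space)

lemma cdfd_L: "0 \<le> \<pi> \<Longrightarrow> \<pi> \<le> 1 \<Longrightarrow> cdf_distribution (L \<pi>)"
  unfolding cdf_distribution_def by (rule real_distribution_L)

lemma Fq_distr: "0 \<le> \<pi> \<Longrightarrow> \<pi> \<le> 1 \<Longrightarrow> distr U01 borel (Fq \<pi>) = L \<pi>"
proof -
  assume a: "0 \<le> \<pi>" "\<pi> \<le> 1"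
  interpret C: cdf_distribution "L \<pi>" by (rule cdfd_L[OF a])
  show ?thesis unfolding U01_def Fq_def[abs_def] by (rule C.distr_I_eq_M)
qed

lemma Fq_meas[measurable]: "0 \<le> \<pi> \<Longrightarrow> \<pi> \<le> 1 \<Longrightarrow> Fq \<pi> \<in> borel_measurable U01"
proof -
  assume a: "0 \<le> \<pi>" "\<pi> \<le> 1"
  interpret C: cdf_distribution "L \<pi>" by (rule cdfd_L[OF a])
  have "sets U01 = sets (restrict_space borel {0<..<1::real})"
    unfolding U01_def by (rule sets_restrict_space_cong) simp
  then show ?thesis unfolding Fq_def[abs_def] using C.measurable_CI
    by (subst measurable_cong_sets[OF _ refl]) auto
qed

lemma Fq_pseudo:
  assumes "0 \<le> \<pi>" "\<pi> \<le> 1" "0 < u" "u < 1"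
  shows "u \<le> cdf (L \<pi>) x \<longleftrightarrow> Fq \<pi> u \<le> x"
proof -
  interpret C: cdf_distribution "L \<pi>" by (rule cdfd_L[OF assms(1,2)])
  show ?thesis unfolding Fq_def by (rule C.pseudoinverse) (use assms in auto)
qed

lemma Fq_mono:
  assumes "0 \<le> \<pi>" "\<pi> \<le> \<pi>'" "\<pi>' \<le> 1" "0 < u" "u < 1"
  shows "Fq \<pi> u \<le> Fq \<pi>' u"
proof -
  have "u \<le> cdf (L \<pi>') (Fq \<pi>' u)" using Fq_pseudo[of \<pi>' u "Fq \<pi>' u"] assms by simp
  also have "\<dots> \<le> cdf (L \<pi>) (Fq \<pi>' u)" by (rule cdf_mono_pi) (use assms in auto)
  finally show ?thesis using Fq_pseudo[of \<pi> u "Fq \<pi>' u"] assms by simp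
qed

lemma Fq_bounds:
  assumes "0 \<le> \<pi>" "\<pi> \<le> 1" "0 < u" "u < 1"
  shows "0 \<le> Fq \<pi> u" "Fq \<pi> u \<le> 1"
proof -
  interpret P: prob_space "mixM \<pi>" by (rule prob_mixM[OF assms(1,2)])
  have sp: "space (mixM \<pi>) = space M" by (simp add: mixM_def)
  have "{x\<in>space M. post p q \<pi> x \<le> 1} = space (mixM \<pi>)" using post_bounds[OF assms(1,2)] sp by auto
  then have "cdf (L \<pi>) 1 = 1" unfolding cdf_L[OF assms(1,2)] using P.prob_space by simp
  then show "Fq \<pi> u \<le> 1" using Fq_pseudo[OF assms, of 1] assms by simp
  show "0 \<le> Fq \<pi> u"
  proof (rule ccontr)
    assume "\<not> 0 \<le> Fq \<pi> u"
    then have neg: "Fq \<pi> u < 0" by simp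
    have e: "{x\<in>space M. post p q \<pi> x \<le> Fq \<pi> u} = {}" using post_bounds[OF assms(1,2)] neg by force
    have "cdf (L \<pi>) (Fq \<pi> u) = 0" unfolding cdf_L[OF assms(1,2)] e by simp
    moreover have "u \<le> cdf (L \<pi>) (Fq \<pi> u)" using Fq_pseudo[OF assms, of "Fq \<pi> u"] by simp
    ultimately show False using assms by simp
  qed
qed

end


definition "lgen = range (\<lambda>n. {xs::real list. length xs = n}) \<union>
      {{xs. i < length xs \<and> xs ! i \<in> B} | i B. B \<in> sets borel}"

lemma list_borel_eq: "list_borel = sigma UNIV lgen"
  unfolding list_borel_def lgen_def ..

lemma sets_list_borel: "sets list_borel = sigma_sets UNIV lgen"
  unfolding list_borel_eq by (rule sets_measure_of) simp

lemma space_list_borel[simp]: "space list_borel = UNIV"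
  unfolding list_borel_eq by (simp add: space_measure_of_conv)

lemma len_set[measurable]: "{xs::real list. length xs = n} \<in> sets list_borel"
  unfolding sets_list_borel lgen_def by (rule sigma_sets.Basic) auto

lemma nth_set: "B \<in> sets borel \<Longrightarrow> {xs::real list. i < length xs \<and> xs ! i \<in> B} \<in> sets list_borel"
  unfolding sets_list_borel lgen_def by (rule sigma_sets.Basic) auto

lemma measurable_list_borelI:
  assumes "\<And>n. f -` {xs. length xs = n} \<inter> space N \<in> sets N"
    and "\<And>i B. B \<in> sets borel \<Longrightarrow> f -` {xs. i < length xs \<and> xs ! i \<in> B} \<inter> space N \<in> sets N"
  shows "f \<in> measurable N list_borel"
  unfolding list_borel_eq
  by (rule measurable_measure_of) (use assms in \<open>auto simp: lgen_def\<close>)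

lemma length_meas[measurable]: "length \<in> measurable list_borel (count_space UNIV)"
  by (subst measurable_count_space_eq2_countable) (auto simp: vimage_def)

definition "el i xs = (if i < length xs then xs ! i else (0::real))"

lemma el_meas[measurable]: "el i \<in> borel_measurable list_borel"
proof (rule measurableI)
  fix B :: "real set" assume B: "B \<in> sets borel"
  have "el i -` B \<inter> space list_borel = {xs. i < length xs \<and> xs ! i \<in> B} \<union>
      (if 0 \<in> B then (\<Union>n\<in>{..i}. {xs. length xs = n}) else {})"
    by (auto simp: el_def split: if_splits)
  also have "\<dots> \<in> sets list_borel"
    using B by (auto intro!: nth_set)
  finally show "el i -` B \<inter> space list_borel \<in> sets list_borel" .
qed simp

lemma Mo_meas_length[measurable]: "length \<in> measurable (Mo K) (count_space UNIV)"
  unfolding Mo_def by (rule measurable_restrict_space1) measurable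

lemma Mo_meas_el[measurable]: "el i \<in> borel_measurable (Mo K)"
  unfolding Mo_def by (rule measurable_restrict_space1) measurable

lemma space_Mo: "space (Mo K) = So K"
  unfolding Mo_def by (simp add: space_restrict_space)

lemma preceq_el:
  assumes "length u \<le> K" "length v \<le> K"
  shows "preceq u v \<longleftrightarrow> length v \<le> length u \<and> (\<forall>i\<in>{..<K}. i < length v \<longrightarrow> el i u \<le> el i v)"
  using assms unfolding preceq_def el_def by auto

lemma preceq_sets:
  "{z \<in> space (Mo K \<Otimes>\<^sub>M Mo K). preceq (fst z) (snd z)} \<in> sets (Mo K \<Otimes>\<^sub>M Mo K)"
proof -
  let ?sp = "space (Mo K \<Otimes>\<^sub>M Mo K)"
  have ls[measurable]: "(\<lambda>z. length (snd z)) \<in> measurable (Mo K \<Otimes>\<^sub>M Mo K) (count_space UNIV)"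
    by measurable
  have lf[measurable]: "(\<lambda>z. length (fst z)) \<in> measurable (Mo K \<Otimes>\<^sub>M Mo K) (count_space UNIV)"
    by measurable
  have s1: "{z \<in> ?sp. length (snd z) \<le> length (fst z)} \<in> sets (Mo K \<Otimes>\<^sub>M Mo K)"
  proof -
    have "{z \<in> ?sp. length (snd z) \<le> length (fst z)} = (\<Union>n. {z \<in> ?sp. length (snd z) = n} \<inter> {z \<in> ?sp. n \<le> length (fst z)})"
      by auto
    also have "\<dots> \<in> sets (Mo K \<Otimes>\<^sub>M Mo K)" by measurable
    finally show ?thesis .
  qed
  have s2: "{z \<in> ?sp. \<not> i < length (snd z)} \<in> sets (Mo K \<Otimes>\<^sub>M Mo K)" for i
    by measurable
  have s3: "{z \<in> ?sp. el i (fst z) \<le> el i (snd z)} \<in> sets (Mo K \<Otimes>\<^sub>M Mo K)" for i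
    by measurable
  have "{z \<in> ?sp. preceq (fst z) (snd z)} =
     {z \<in> ?sp. length (snd z) \<le> length (fst z)} \<inter> (\<Inter>i\<in>{..<K}. {z \<in> ?sp. \<not> i < length (snd z)} \<union> {z \<in> ?sp. el i (fst z) \<le> el i (snd z)})"
    using preceq_el by (auto simp: space_pair_measure space_Mo So_def)
  also have "\<dots> \<in> sets (Mo K \<Otimes>\<^sub>M Mo K)"
  proof (cases "K = 0")
    case True then show ?thesis using s1 by simp
  next
    case False
    then show ?thesis using s1 s2 s3 by (intro sets.Int sets.finite_INT) auto
  qed
  finally show ?thesis .
qed


definition clamp01 :: "real \<Rightarrow> real" where "clamp01 v = max 0 (min 1 v)"

definition Psi :: "nat set \<Rightarrow> (nat \<Rightarrow> real) \<Rightarrow> real list" where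
  "Psi C y = sort (map (\<lambda>k. clamp01 (y k)) (sorted_list_of_set C))"

lemma clamp01_meas[measurable]: "clamp01 \<in> borel_measurable borel"
  unfolding clamp01_def[abs_def] by measurable

lemma clamp01_id: "0 \<le> v \<Longrightarrow> v \<le> 1 \<Longrightarrow> clamp01 v = v"
  unfolding clamp01_def by simp

lemma clamp01_mono: "v \<le> w \<Longrightarrow> clamp01 v \<le> clamp01 w"
  unfolding clamp01_def by simp

lemma length_Psi[simp]: "finite C \<Longrightarrow> length (Psi C y) = card C"
  unfolding Psi_def by simp

lemma Psi_So: "finite C \<Longrightarrow> card C \<le> K \<Longrightarrow> Psi C y \<in> So K"
  unfolding So_def Psi_def by (auto simp: clamp01_def)

lemma Psi_nth_le:
  assumes "finite C" "i < card C"
  shows "Psi C y ! i \<le> a \<longleftrightarrow> real i < (\<Sum>k\<in>C. indicator {r. clamp01 r \<le> a} (y k))"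
proof -
  have "Psi C y ! i \<le> a \<longleftrightarrow> i < length (filter (\<lambda>x. x \<le> a) (map (\<lambda>k. clamp01 (y k)) (sorted_list_of_set C)))"
    unfolding Psi_def by (rule sort_nth_le_iff) (use assms in simp)
  also have "\<dots> \<longleftrightarrow> i < card {k\<in>C. clamp01 (y k) \<le> a}"
    using cnt_map_set[OF assms(1), where Y="\<lambda>k. clamp01 (y k)" and c=a] by simp
  finally have 1: "Psi C y ! i \<le> a \<longleftrightarrow> i < card {k\<in>C. clamp01 (y k) \<le> a}" .
  have "real (card {k\<in>C. clamp01 (y k) \<le> a}) = (\<Sum>k\<in>C. indicator {r. clamp01 r \<le> a} (y k))"
    using assms(1) by (simp add: indicator_def sum.If_cases Int_def)
  then show ?thesis using 1 by linarith
qed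

lemma Psi_nth_meas:
  assumes "finite C" "i < card C"
  shows "(\<lambda>y. Psi C y ! i) \<in> borel_measurable (PiM C (\<lambda>_. borel))"
proof (subst borel_measurable_iff_le, intro allI)
  fix a
  have "{w \<in> space (PiM C (\<lambda>_. borel)). Psi C w ! i \<le> a} =
      {w \<in> space (PiM C (\<lambda>_. borel)). real i < (\<Sum>k\<in>C. indicator {r. clamp01 r \<le> a} (w k))}"
    using Psi_nth_le[OF assms] by auto
  also have "\<dots> \<in> sets (PiM C (\<lambda>_. borel))" by measurable
  finally show "{w \<in> space (PiM C (\<lambda>_. borel)). Psi C w ! i \<le> a} \<in> sets (PiM C (\<lambda>_. borel))" .
qed

lemma Psi_meas:
  assumes "finite C" "card C \<le> K"
  shows "Psi C \<in> measurable (PiM C (\<lambda>_. borel)) (Mo K)"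
  unfolding Mo_def
proof (rule measurable_restrict_space2)
  show "Psi C \<in> space (PiM C (\<lambda>_. borel)) \<rightarrow> So K" using Psi_So[OF assms] by auto
  show "Psi C \<in> measurable (PiM C (\<lambda>_. borel)) list_borel"
  proof (rule measurable_list_borelI)
    fix n
    show "Psi C -` {xs. length xs = n} \<inter> space (PiM C (\<lambda>_. borel)) \<in> sets (PiM C (\<lambda>_. borel))"
      using assms by (cases "card C = n") auto
  next
    fix i and B :: "real set" assume B: "B \<in> sets borel"
    show "Psi C -` {xs. i < length xs \<and> xs ! i \<in> B} \<inter> space (PiM C (\<lambda>_. borel)) \<in> sets (PiM C (\<lambda>_. borel))"
    proof (cases "i < card C")
      case True
      have "Psi C -` {xs. i < length xs \<and> xs ! i \<in> B} \<inter> space (PiM C (\<lambda>_. borel))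
          = (\<lambda>y. Psi C y ! i) -` B \<inter> space (PiM C (\<lambda>_. borel))"
        using True assms by auto
      also have "\<dots> \<in> sets (PiM C (\<lambda>_. borel))"
        by (rule measurable_sets[OF Psi_nth_meas[OF assms(1) True] B])
      finally show ?thesis .
    next
      case False
      then show ?thesis using assms by auto
    qed
  qed
qed


lemma distr_PiM_indexed:
  fixes Mi :: "nat \<Rightarrow> 'a measure" and Ni :: "nat \<Rightarrow> 'b measure"
  assumes fin: "finite I"
    and pM: "\<And>i. i \<in> I \<Longrightarrow> prob_space (Mi i)"
    and fm: "\<And>i. i \<in> I \<Longrightarrow> f i \<in> measurable (Mi i) (Ni i)"
  shows "distr (PiM I Mi) (PiM I Ni) (\<lambda>x. \<lambda>i\<in>I. f i (x i)) = PiM I (\<lambda>i. distr (Mi i) (Ni i) (f i))"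
proof -
  define D where "D i = (if i \<in> I then distr (Mi i) (Ni i) (f i) else return (count_space UNIV) undefined)" for i
  have pD: "prob_space (D i)" for i
    using pM fm by (auto simp: D_def prob_space.prob_space_distr prob_space_return)
  interpret DD: product_prob_space D by (rule product_prob_spaceI) (rule pD)
  have eqD: "PiM I (\<lambda>i. distr (Mi i) (Ni i) (f i)) = PiM I D" by (rule PiM_cong) (auto simp: D_def)
  have meas: "(\<lambda>x. \<lambda>i\<in>I. f i (x i)) \<in> measurable (PiM I Mi) (PiM I Ni)"
    by (rule measurable_restrict) (use fm in \<open>auto intro: measurable_compose[OF measurable_component_singleton]\<close>)
  show ?thesis unfolding eqD
  proof (rule DD.PiM_eqI[OF fin])
    show "sets (distr (PiM I Mi) (PiM I Ni) (\<lambda>x. \<lambda>i\<in>I. f i (x i))) = sets (PiM I D)"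
      by (simp, rule sets_PiM_cong) (auto simp: D_def)
    fix A assume A: "\<And>i. i \<in> I \<Longrightarrow> A i \<in> sets (D i)"
    then have A': "\<And>i. i \<in> I \<Longrightarrow> A i \<in> sets (Ni i)" by (simp add: D_def)
    have pre: "(\<lambda>x. \<lambda>i\<in>I. f i (x i)) -` PiE I A \<inter> space (PiM I Mi) = PiE I (\<lambda>i. f i -` A i \<inter> space (Mi i))"
      by (auto simp: space_PiM PiE_def Pi_def extensional_def)
    interpret MM: product_prob_space "\<lambda>i. if i \<in> I then Mi i else return (count_space UNIV) undefined"
      by (rule product_prob_spaceI) (auto simp: pM prob_space_return)
    have eqM: "PiM I Mi = PiM I (\<lambda>i. if i \<in> I then Mi i else return (count_space UNIV) undefined)"
      by (rule PiM_cong) auto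
    have "emeasure (distr (PiM I Mi) (PiM I Ni) (\<lambda>x. \<lambda>i\<in>I. f i (x i))) (PiE I A)
        = emeasure (PiM I Mi) (PiE I (\<lambda>i. f i -` A i \<inter> space (Mi i)))"
      using A' fin by (subst emeasure_distr[OF meas]) (auto intro!: sets_PiM_I_finite simp: pre)
    also have "\<dots> = (\<Prod>i\<in>I. emeasure (Mi i) (f i -` A i \<inter> space (Mi i)))"
      unfolding eqM using A' fm by (subst MM.emeasure_PiM[OF fin]) (auto intro!: prod.cong measurable_sets)
    also have "\<dots> = (\<Prod>i\<in>I. emeasure (D i) (A i))"
      using A' fm by (intro prod.cong refl) (simp add: D_def emeasure_distr)
    finally show "emeasure (distr (PiM I Mi) (PiM I Ni) (\<lambda>x. \<lambda>i\<in>I. f i (x i))) (PiE I A) = (\<Prod>i\<in>I. emeasure (D i) (A i))" .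
  qed
qed

lemma density_cong_space:
  "(\<And>x. x \<in> space M \<Longrightarrow> f x = g x) \<Longrightarrow> density M f = density M g"
  unfolding density_def by (simp cong: nn_integral_cong)

context mpq
begin

lemma PiM_density:
  fixes f :: "nat \<Rightarrow> 'x \<Rightarrow> ennreal"
  assumes fin: "finite I" and fm[measurable]: "\<And>i. i \<in> I \<Longrightarrow> f i \<in> borel_measurable M"
    and pr: "\<And>i. i \<in> I \<Longrightarrow> prob_space (density M (f i))"
  shows "density (PiM I (\<lambda>_. M)) (\<lambda>x. \<Prod>i\<in>I. f i (x i)) = PiM I (\<lambda>i. density M (f i))"
proof -
  define g where "g i = (if i \<in> I then f i else (\<lambda>_. 1))" for i
  have gm[measurable]: "g i \<in> borel_measurable M" for i by (auto simp: g_def)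
  have sfg: "sigma_finite_measure (density M (g i))" for i
  proof (cases "i \<in> I")
    case True then show ?thesis using pr[OF True] by (simp add: g_def prob_space_imp_sigma_finite)
  next
    case False then show ?thesis using sf by (simp add: g_def density_1)
  qed
  interpret N: product_sigma_finite "\<lambda>i. density M (g i)"
    by (simp add: product_sigma_finite_def sfg)
  interpret MM: product_sigma_finite "\<lambda>_. M"
    by (simp add: product_sigma_finite_def sf)
  have eqP: "PiM I (\<lambda>i. density M (f i)) = PiM I (\<lambda>i. density M (g i))"
    by (rule PiM_cong) (auto simp: g_def)
  have eqF: "(\<lambda>x. \<Prod>i\<in>I. f i (x i)) = (\<lambda>x. \<Prod>i\<in>I. g i (x i))"
    by (auto simp: g_def intro!: prod.cong)
  show ?thesis unfolding eqP eqF
  proof (rule N.PiM_eqI[OF fin])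
    show "sets (density (PiM I (\<lambda>_. M)) (\<lambda>x. \<Prod>i\<in>I. g i (x i))) = sets (PiM I (\<lambda>i. density M (g i)))"
      unfolding sets_density by (rule sets_PiM_cong) auto
    fix A assume A: "\<And>i. i \<in> I \<Longrightarrow> A i \<in> sets (density M (g i))"
    then have A'[measurable]: "\<And>i. i \<in> I \<Longrightarrow> A i \<in> sets M" by simp
    have "emeasure (density (PiM I (\<lambda>_. M)) (\<lambda>x. \<Prod>i\<in>I. g i (x i))) (PiE I A)
        = (\<integral>\<^sup>+ x. (\<Prod>i\<in>I. g i (x i)) * indicator (PiE I A) x \<partial>PiM I (\<lambda>_. M))"
      by (rule emeasure_density) (auto intro!: sets_PiM_I_finite fin)
    also have "\<dots> = (\<integral>\<^sup>+ x. (\<Prod>i\<in>I. g i (x i) * indicator (A i) (x i)) \<partial>PiM I (\<lambda>_. M))"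
    proof (rule nn_integral_cong)
      fix x assume x: "x \<in> space (PiM I (\<lambda>_. M))"
      then have xe: "x \<in> extensional I" by (simp add: space_PiM PiE_def)
      show "(\<Prod>i\<in>I. g i (x i)) * indicator (PiE I A) x = (\<Prod>i\<in>I. g i (x i) * indicator (A i) (x i))"
      proof (cases "x \<in> PiE I A")
        case True
        then have "\<forall>i\<in>I. x i \<in> A i" by (auto simp: PiE_def Pi_def)
        then have "(\<Prod>i\<in>I. g i (x i) * indicator (A i) (x i)) = (\<Prod>i\<in>I. g i (x i))"
          by (intro prod.cong) auto
        then show ?thesis using True by simp
      next
        case False
        then obtain j where j: "j \<in> I" "x j \<notin> A j" using xe by (auto simp: PiE_def Pi_def)
        then have "(\<Prod>i\<in>I. g i (x i) * indicator (A i) (x i)) = 0"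
          using fin j by (intro prod_zero) (auto intro!: bexI[of _ j])
        then show ?thesis using False by simp
      qed
    qed
    also have "\<dots> = (\<Prod>i\<in>I. \<integral>\<^sup>+ y. g i y * indicator (A i) y \<partial>M)"
      by (rule MM.product_nn_integral_prod[OF fin]) auto
    also have "\<dots> = (\<Prod>i\<in>I. emeasure (density M (g i)) (A i))"
      by (intro prod.cong refl emeasure_density[symmetric]) auto
    finally show "emeasure (density (PiM I (\<lambda>_. M)) (\<lambda>x. \<Prod>i\<in>I. g i (x i))) (PiE I A) = (\<Prod>i\<in>I. emeasure (density M (g i)) (A i))" .
  qed
qed

end


locale mh = mpq +
  fixes \<theta> :: real and K :: nat and h :: "'a history"
  assumes th: "0 < \<theta>" "\<theta> < 1" and wf: "wfh K h" and nh: "nnh p q h"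
    and mpos: "mdens \<theta> K p q h > 0"
begin

definition "pk k = \<pi>s \<theta> p q h k"

lemma mne: "mdens \<theta> K p q h \<noteq> 0" using mpos by simp

lemma pk_W: "k \<in> {1..K} \<Longrightarrow> pk k = Wpost \<theta> K p q h k + \<theta> * (1 - Wpost \<theta> K p q h k)"
  unfolding pk_def by (rule \<pi>s_W(1)[OF th wf nh mne])

lemma pk_bounds:
  assumes "k \<in> {1..K}" shows "0 \<le> pk k" "pk k \<le> 1"
proof -
  have W: "0 \<le> Wpost \<theta> K p q h k" "Wpost \<theta> K p q h k \<le> 1" using \<pi>s_W(2,3)[OF th wf nh mne assms] by auto
  have "0 \<le> \<theta> * (1 - Wpost \<theta> K p q h k)" using W th by simp
  then show "0 \<le> pk k" using pk_W[OF assms] W by linarith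
  have "\<theta> * (1 - Wpost \<theta> K p q h k) \<le> 1 - Wpost \<theta> K p q h k"
    using W th by (intro mult_left_le_one_le) auto
  then show "pk k \<le> 1" using pk_W[OF assms] by linarith
qed

lemma pk_mono:
  assumes "j \<in> {1..K}" "k \<in> {1..K}" "Wpost \<theta> K p q h j \<le> Wpost \<theta> K p q h k"
  shows "pk j \<le> pk k"
proof -
  have "(1 - \<theta>) * Wpost \<theta> K p q h j \<le> (1 - \<theta>) * Wpost \<theta> K p q h k"
    using assms th by (intro mult_left_mono) auto
  then show ?thesis unfolding pk_W[OF assms(1)] pk_W[OF assms(2)] by (simp add: algebra_simps)
qed

lemma pred_eq:
  assumes C: "C \<subseteq> {1..K}"
  shows "pred \<theta> K M p q h C = PiM C (\<lambda>k. mixM (pk k))"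
proof -
  have fC: "finite C" using C finite_subset by blast
  have "pred \<theta> K M p q h C = density (PiM C (\<lambda>_. M)) (\<lambda>x'. \<Prod>k\<in>C. ennreal (mixd p q (pk k) (x' k)))"
    unfolding pred_def
  proof (rule density_cong_space)
    fix x' assume x': "x' \<in> space (PiM C (\<lambda>_. M))"
    then have xs: "\<And>k. k \<in> C \<Longrightarrow> x' k \<in> space M" by (auto simp: space_PiM)
    have nn: "\<forall>k\<in>C. p (x' k) \<ge> 0 \<and> q (x' k) \<ge> 0" using xs pnn qnn by auto
    have "mdens \<theta> K p q (h @ [(C, x')]) / mdens \<theta> K p q h = (\<Prod>k\<in>C. mixd p q (pk k) (x' k))"
      unfolding mdens_step[OF th wf nh mne C nn] pk_def using mne by simp
    moreover have "(\<Prod>k\<in>C. ennreal (mixd p q (pk k) (x' k))) = ennreal (\<Prod>k\<in>C. mixd p q (pk k) (x' k))"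
      using C pk_bounds xs by (intro prod_ennreal mixd_nonneg) auto
    ultimately show "ennreal (mdens \<theta> K p q (h @ [(C, x')]) / mdens \<theta> K p q h) = (\<Prod>k\<in>C. ennreal (mixd p q (pk k) (x' k)))"
      by simp
  qed
  also have "\<dots> = PiM C (\<lambda>k. density M (\<lambda>x. ennreal (mixd p q (pk k) x)))"
    using C pk_bounds prob_mixM by (intro PiM_density fC) (auto simp: mixM_def)
  also have "\<dots> = PiM C (\<lambda>k. mixM (pk k))" by (simp add: mixM_def)
  finally show ?thesis .
qed

lemma prob_PiM_mix:
  assumes C: "C \<subseteq> {1..K}"
  shows "prob_space (PiM C (\<lambda>k. mixM (pk k)))"
  using C pk_bounds prob_mixM by (intro prob_space_PiM) auto

lemma sets_PiM_mix: "sets (PiM C (\<lambda>k. mixM (pk k))) = sets (PiM C (\<lambda>_. M))"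
  by (rule sets_PiM_cong) (auto simp: mixM_def)

lemma space_PiM_mix: "space (PiM C (\<lambda>k. mixM (pk k))) = space (PiM C (\<lambda>_. M))"
  by (rule sets_eq_imp_space_eq[OF sets_PiM_mix])

lemma next_law_eq:
  assumes C: "C \<subseteq> {1..K}"
  shows "distr (pred \<theta> K M p q h C) (Mo K) (\<lambda>x'. sort (map (Wpost \<theta> K p q (h @ [(C, x')])) (sorted_list_of_set C)))
       = distr (PiM C (\<lambda>k. L (pk k))) (Mo K) (Psi C)"
proof -
  have fC: "finite C" using C finite_subset by blast
  have cC: "card C \<le> K" using card_mono[OF _ C] by simp
  let ?N = "PiM C (\<lambda>k. mixM (pk k))"
  let ?Pr = "\<lambda>x'. \<Prod>j\<in>C. mixd p q (pk j) (x' j)"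
  define V where "V x' = (\<lambda>k\<in>C. if ?Pr x' = 0 then 0 else post p q (pk k) (x' k))" for x'
  define G where "G x' = (\<lambda>k\<in>C. post p q (pk k) (x' k))" for x'
  let ?\<Phi> = "\<lambda>x'. sort (map (Wpost \<theta> K p q (h @ [(C, x')])) (sorted_list_of_set C))"
  have sN: "sets ?N = sets (PiM C (\<lambda>_. M))" by (rule sets_PiM_mix)
  have spN: "space ?N = space (PiM C (\<lambda>_. M))" by (rule space_PiM_mix)
  have eq1: "?\<Phi> x' = Psi C (V x')" if x': "x' \<in> space ?N" for x'
  proof -
    have xs: "\<And>k. k \<in> C \<Longrightarrow> x' k \<in> space M" using x' unfolding spN by (auto simp: space_PiM)
    have nn: "\<forall>k\<in>C. p (x' k) \<ge> 0 \<and> q (x' k) \<ge> 0" using xs pnn qnn by auto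
    have md: "mdens \<theta> K p q (h @ [(C, x')]) = 0 \<longleftrightarrow> ?Pr x' = 0"
      unfolding mdens_step[OF th wf nh mne C nn] pk_def using mne by simp
    have "Wpost \<theta> K p q (h @ [(C, x')]) k = clamp01 (V x' k)" if k: "k \<in> C" for k
    proof -
      have kK: "k \<in> {1..K}" using k C by auto
      have "Wpost \<theta> K p q (h @ [(C, x')]) k = V x' k"
        unfolding Wpost_step[OF th wf nh mne C nn k] V_def md using k by (simp add: pk_def)
      moreover have "0 \<le> V x' k" "V x' k \<le> 1"
        unfolding V_def using post_bounds[OF pk_bounds[OF kK] xs[OF k]] k by auto
      ultimately show ?thesis by (simp add: clamp01_id)
    qed
    then show ?thesis unfolding Psi_def using fC by (intro arg_cong[where f=sort] map_cong) auto
  qed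
  have Vm: "V \<in> measurable ?N (PiM C (\<lambda>_. borel))"
  proof -
    have "V \<in> measurable (PiM C (\<lambda>_. M)) (PiM C (\<lambda>_. borel))"
      unfolding V_def using fC by measurable
    then show ?thesis by (subst measurable_cong_sets[OF sN refl])
  qed
  have Gm: "G \<in> measurable ?N (PiM C (\<lambda>_. borel))"
  proof -
    have "G \<in> measurable (PiM C (\<lambda>_. M)) (PiM C (\<lambda>_. borel))"
      unfolding G_def using fC by measurable
    then show ?thesis by (subst measurable_cong_sets[OF sN refl])
  qed
  have PsiV: "(\<lambda>x'. Psi C (V x')) \<in> measurable ?N (Mo K)"
    using measurable_comp[OF Vm Psi_meas[OF fC cC]] by (simp add: comp_def)
  have Phim: "?\<Phi> \<in> measurable ?N (Mo K)"
    using PsiV by (rule measurable_cong[THEN iffD2, rotated]) (simp add: eq1)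
  have PsiG: "(\<lambda>x'. Psi C (G x')) \<in> measurable ?N (Mo K)"
    using measurable_comp[OF Gm Psi_meas[OF fC cC]] by (simp add: comp_def)
  have AEnz: "AE x' in ?N. \<forall>j\<in>C. mixd p q (pk j) (x' j) \<noteq> 0"
  proof (rule AE_finite_allI[OF fC])
    fix j assume j: "j \<in> C"
    have jK: "j \<in> {1..K}" using j C by auto
    have "AE y in mixM (pk j). mixd p q (pk j) y \<noteq> 0"
      unfolding mixM_def by (subst AE_density) (auto intro!: AE_I2)
    moreover have eqd: "distr ?N (mixM (pk j)) (\<lambda>\<omega>. \<omega> j) = mixM (pk j)"
    proof (rule distr_PiM_component[OF _ j])
      fix i assume "i \<in> C"
      then have "i \<in> {1..K}" using C by auto
      then show "prob_space (mixM (pk i))" using prob_mixM pk_bounds by blast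
    qed
    ultimately have "AE y in distr ?N (mixM (pk j)) (\<lambda>\<omega>. \<omega> j). mixd p q (pk j) y \<noteq> 0"
      by (subst eqd)
    then show "AE x' in ?N. mixd p q (pk j) (x' j) \<noteq> 0"
      by (rule AE_distrD[rotated]) (use j in measurable)
  qed
  have AEeq: "AE x' in ?N. ?\<Phi> x' = Psi C (G x')"
    using AEnz
  proof (rule AE_mp, intro AE_I2 impI)
    fix x' assume x': "x' \<in> space ?N" and nz: "\<forall>j\<in>C. mixd p q (pk j) (x' j) \<noteq> 0"
    then have "?Pr x' \<noteq> 0" using fC by simp
    then have "V x' = G x'" unfolding V_def G_def by auto
    then show "?\<Phi> x' = Psi C (G x')" using eq1[OF x'] by simp
  qed
  have "distr (pred \<theta> K M p q h C) (Mo K) ?\<Phi> = distr ?N (Mo K) ?\<Phi>"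
    unfolding pred_eq[OF C] ..
  also have "\<dots> = distr ?N (Mo K) (\<lambda>x'. Psi C (G x'))"
    by (rule distr_cong_AE[OF refl refl AEeq Phim PsiG])
  also have "\<dots> = distr (distr ?N (PiM C (\<lambda>_. borel)) G) (Mo K) (Psi C)"
    by (subst distr_distr[OF Psi_meas[OF fC cC] Gm]) (simp add: comp_def)
  also have "distr ?N (PiM C (\<lambda>_. borel)) G = PiM C (\<lambda>k. distr (mixM (pk k)) borel (post p q (pk k)))"
    unfolding G_def
  proof (rule distr_PiM_indexed[OF fC])
    fix k assume "k \<in> C"
    then have kK: "k \<in> {1..K}" using C by auto
    show "prob_space (mixM (pk k))" by (rule prob_mixM[OF pk_bounds[OF kK]])
    show "post p q (pk k) \<in> borel_measurable (mixM (pk k))" by simp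
  qed
  also have "\<dots> = PiM C (\<lambda>k. L (pk k))" by (simp add: L_def)
  finally show ?thesis .
qed

lemma law_via_U:
  assumes C: "C \<subseteq> {1..K}"
  shows "distr (PiM C (\<lambda>_. U01)) (PiM C (\<lambda>_. borel)) (\<lambda>u. \<lambda>c\<in>C. Fq (pk c) (u c)) = PiM C (\<lambda>c. L (pk c))"
proof -
  have fC: "finite C" using C finite_subset by blast
  have "distr (PiM C (\<lambda>_. U01)) (PiM C (\<lambda>_. borel)) (\<lambda>u. \<lambda>c\<in>C. Fq (pk c) (u c)) = PiM C (\<lambda>c. distr U01 borel (Fq (pk c)))"
  proof (rule distr_PiM_indexed[OF fC])
    fix c assume "c \<in> C"
    then have cK: "c \<in> {1..K}" using C by auto
    show "prob_space U01" by (rule prob_U01)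
    show "Fq (pk c) \<in> borel_measurable U01" by (rule Fq_meas[OF pk_bounds[OF cK]])
  qed
  also have "\<dots> = PiM C (\<lambda>c. L (pk c))"
    using C by (intro PiM_cong refl Fq_distr pk_bounds) auto
  finally show ?thesis .
qed

lemma coupling:
  assumes C: "C \<subseteq> {1..K}" and B: "B \<subseteq> {1..K}" and inj: "inj_on \<phi> B" and im: "\<phi> ` B \<subseteq> C"
    and le: "\<And>b. b \<in> B \<Longrightarrow> pk (\<phi> b) \<le> pk b"
  shows "\<exists>\<nu>. prob_space \<nu> \<and> sets \<nu> = sets (Mo K \<Otimes>\<^sub>M Mo K) \<and>
      distr \<nu> (Mo K) fst = distr (PiM C (\<lambda>k. L (pk k))) (Mo K) (Psi C) \<and>
      distr \<nu> (Mo K) snd = distr (PiM B (\<lambda>k. L (pk k))) (Mo K) (Psi B) \<and>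
      (AE z in \<nu>. preceq (fst z) (snd z))"
proof -
  have fC: "finite C" using C finite_subset by blast
  have fB: "finite B" using B finite_subset by blast
  have cC: "card C \<le> K" using card_mono[OF _ C] by simp
  have cB: "card B \<le> K" using card_mono[OF _ B] by simp
  let ?U = "PiM C (\<lambda>_. U01)"
  have pU: "prob_space ?U" by (intro prob_space_PiM prob_U01)
  then interpret U: prob_space ?U .
  define FC where "FC u = (\<lambda>c\<in>C. Fq (pk c) (u c))" for u :: "nat \<Rightarrow> real"
  define FB' where "FB' v = (\<lambda>b\<in>B. Fq (pk b) (v b))" for v :: "nat \<Rightarrow> real"
  define R where "R u = (\<lambda>b\<in>B. u (\<phi> b))" for u :: "nat \<Rightarrow> real"
  have FCm: "FC \<in> measurable ?U (PiM C (\<lambda>_. borel))"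
    unfolding FC_def
  proof (rule measurable_restrict)
    fix c assume "c \<in> C"
    then have cK: "c \<in> {1..K}" using C by auto
    show "(\<lambda>u. Fq (pk c) (u c)) \<in> borel_measurable ?U"
      by (rule measurable_compose[OF measurable_component_singleton[OF \<open>c \<in> C\<close>] Fq_meas[OF pk_bounds[OF cK]]])
  qed
  have FBm: "FB' \<in> measurable (PiM B (\<lambda>_. U01)) (PiM B (\<lambda>_. borel))"
    unfolding FB'_def
  proof (rule measurable_restrict)
    fix b assume "b \<in> B"
    then have bK: "b \<in> {1..K}" using B by auto
    show "(\<lambda>u. Fq (pk b) (u b)) \<in> borel_measurable (PiM B (\<lambda>_. U01))"
      by (rule measurable_compose[OF measurable_component_singleton[OF \<open>b \<in> B\<close>] Fq_meas[OF pk_bounds[OF bK]]])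
  qed
  have Rm: "R \<in> measurable ?U (PiM B (\<lambda>_. U01))"
    unfolding R_def using im by (intro measurable_restrict measurable_component_singleton) auto
  define Y where "Y u = Psi C (FC u)" for u
  define Z where "Z u = Psi B (FB' (R u))" for u
  have Ym: "Y \<in> measurable ?U (Mo K)"
    unfolding Y_def using measurable_comp[OF FCm Psi_meas[OF fC cC]] by (simp add: comp_def)
  have Zm: "Z \<in> measurable ?U (Mo K)"
    unfolding Z_def using measurable_comp[OF measurable_comp[OF Rm FBm] Psi_meas[OF fB cB]] by (simp add: comp_def)
  have Hm: "(\<lambda>u. (Y u, Z u)) \<in> measurable ?U (Mo K \<Otimes>\<^sub>M Mo K)"
    using Ym Zm by (rule measurable_Pair)
  define \<nu> where "\<nu> = distr ?U (Mo K \<Otimes>\<^sub>M Mo K) (\<lambda>u. (Y u, Z u))"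
  show ?thesis
  proof (intro exI[of _ \<nu>] conjI)
    show "prob_space \<nu>" unfolding \<nu>_def by (rule U.prob_space_distr[OF Hm])
    show "sets \<nu> = sets (Mo K \<Otimes>\<^sub>M Mo K)" unfolding \<nu>_def by simp
    have "distr \<nu> (Mo K) fst = distr ?U (Mo K) Y"
      unfolding \<nu>_def by (subst distr_distr[OF measurable_fst Hm]) (simp add: comp_def)
    also have "\<dots> = distr (distr ?U (PiM C (\<lambda>_. borel)) FC) (Mo K) (Psi C)"
      by (subst distr_distr[OF Psi_meas[OF fC cC] FCm]) (simp add: comp_def Y_def[abs_def])
    also have "distr ?U (PiM C (\<lambda>_. borel)) FC = PiM C (\<lambda>c. L (pk c))"
      unfolding FC_def by (rule law_via_U[OF C])
    finally show "distr \<nu> (Mo K) fst = distr (PiM C (\<lambda>k. L (pk k))) (Mo K) (Psi C)" .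
    have "distr \<nu> (Mo K) snd = distr ?U (Mo K) Z"
      unfolding \<nu>_def by (subst distr_distr[OF measurable_snd Hm]) (simp add: comp_def)
    also have "\<dots> = distr (distr ?U (PiM B (\<lambda>_. U01)) R) (Mo K) (\<lambda>v. Psi B (FB' v))"
      using measurable_comp[OF FBm Psi_meas[OF fB cB]]
      by (subst distr_distr[OF _ Rm]) (simp_all add: comp_def Z_def[abs_def])
    also have "distr ?U (PiM B (\<lambda>_. U01)) R = PiM B (\<lambda>_. U01)"
      unfolding R_def using distr_PiM_reindex[of C "\<lambda>_. U01" \<phi> B] prob_U01 inj im by auto
    also have "distr (PiM B (\<lambda>_. U01)) (Mo K) (\<lambda>v. Psi B (FB' v)) = distr (distr (PiM B (\<lambda>_. U01)) (PiM B (\<lambda>_. borel)) FB') (Mo K) (Psi B)"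
      by (subst distr_distr[OF Psi_meas[OF fB cB] FBm]) (simp add: comp_def)
    also have "distr (PiM B (\<lambda>_. U01)) (PiM B (\<lambda>_. borel)) FB' = PiM B (\<lambda>c. L (pk c))"
      unfolding FB'_def by (rule law_via_U[OF B])
    finally show "distr \<nu> (Mo K) snd = distr (PiM B (\<lambda>k. L (pk k))) (Mo K) (Psi B)" .
    show "AE z in \<nu>. preceq (fst z) (snd z)"
      unfolding \<nu>_def
    proof (subst AE_distr_iff[OF Hm preceq_sets], intro AE_I2)
      fix u assume u: "u \<in> space ?U"
      then have u01: "\<And>c. c \<in> C \<Longrightarrow> u c \<in> {0<..<1}" by (auto simp: space_PiM space_U01)
      show "preceq (fst (Y u, Z u)) (snd (Y u, Z u))"
        unfolding fst_conv snd_conv Y_def Z_def Psi_def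
      proof (rule dom_sort[OF fB fC inj im])
        fix b assume b: "b \<in> B"
        have bK: "b \<in> {1..K}" using b B by auto
        have pb: "\<phi> b \<in> C" using b im by auto
        then have pK: "\<phi> b \<in> {1..K}" using C by blast
        have "Fq (pk (\<phi> b)) (u (\<phi> b)) \<le> Fq (pk b) (u (\<phi> b))"
          using Fq_mono[of "pk (\<phi> b)" "pk b" "u (\<phi> b)"] pk_bounds[OF pK] pk_bounds[OF bK] le[OF b] u01[OF pb]
          by auto
        then show "clamp01 (FC u (\<phi> b)) \<le> clamp01 (FB' (R u) b)"
          unfolding FC_def FB'_def R_def using b pb by (simp add: clamp01_mono)
      qed
    qed
  qed
qed

end


lemma consistent_take:
  assumes "consistent K A h" "n \<le> length h"
  shows "consistent K A (take n h)"
  using assms unfolding consistent_def by (auto simp: min_def)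

lemma wfh_of_proc:
  assumes P: "is_procedure K A" and c: "consistent K A h"
  shows "wfh K h"
  unfolding wfh_def
proof (intro allI impI)
  fix i assume "i < length h"
  then show "fst (h ! i) \<subseteq> {1..K}"
  proof (induction i)
    case 0
    then show ?case using c unfolding consistent_def by auto
  next
    case (Suc i)
    have eq: "fst (h ! Suc i) = A (take (Suc i) h)" using c Suc.prems unfolding consistent_def by auto
    have ct: "consistent K A (take (Suc i) h)" by (rule consistent_take[OF c]) (use Suc.prems in auto)
    have ne: "take (Suc i) h \<noteq> []" using Suc.prems by auto
    have "A (take (Suc i) h) \<subseteq> fst (last (take (Suc i) h))" using P ct ne unfolding is_procedure_def by auto
    also have "last (take (Suc i) h) = h ! i" using ne Suc.prems by (simp add: last_conv_nth min_def)
    finally show ?case using eq Suc by auto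
  qed
qed

theorem propositionB1:
  fixes M :: "'x measure" and p q :: "'x \<Rightarrow> real" and \<theta> \<alpha> :: real
    and K t0 :: nat and A :: "'x history \<Rightarrow> nat set" and h :: "'x history"
  assumes "K \<ge> 1"
    and "0 < \<theta>" and "\<theta> < 1"
    and "sigma_finite_measure M"
    and "p \<in> borel_measurable M" and "q \<in> borel_measurable M"
    and "\<forall>x\<in>space M. p x \<ge> 0" and "\<forall>x\<in>space M. q x \<ge> 0"
    and "(\<integral>\<^sup>+x. ennreal (p x) \<partial>M) = 1" and "(\<integral>\<^sup>+x. ennreal (q x) \<partial>M) = 1"
    and "0 < \<alpha>" and "\<alpha> \<le> 1"
    and "T_alpha \<alpha> \<theta> K M p q A"
    and "t0 \<ge> 1" and "length h = t0"
    and "in_support \<theta> K M p q A h"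
  shows "\<exists>\<nu>. prob_space \<nu> \<and> sets \<nu> = sets (Mo K \<Otimes>\<^sub>M Mo K) \<and>
           distr \<nu> (Mo K) fst = next_law \<theta> K M p q (switch \<theta> K p q \<alpha> A t0) h \<and>
           distr \<nu> (Mo K) snd = next_law \<theta> K M p q (switch \<theta> K p q \<alpha> A (Suc t0)) h \<and>
           (AE z in \<nu>. preceq (fst z) (snd z))"
proof -
  note a = assms
  interpret mpq M p q by (rule mpq.intro[OF a(4) a(5) a(6) a(7) a(8) a(9) a(10)])
  have P: "is_procedure K A" using a(13) unfolding T_alpha_def by simp
  have c: "consistent K A h" using a(16) unfolding in_support_def by simp
  have wf: "wfh K h" by (rule wfh_of_proc[OF P c])
  have nh: "nnh p q h"
    unfolding nnh_def
  proof (intro allI impI ballI)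
    fix i k assume i: "i < length h" and k: "k \<in> fst (h ! i)"
    then have "snd (h ! i) k \<in> space M" using a(16) unfolding in_support_def by (auto simp: PiE_def Pi_def)
    then show "p (snd (h ! i) k) \<ge> 0 \<and> q (snd (h ! i) k) \<ge> 0" using a(7,8) by auto
  qed
  have mpos: "mdens \<theta> K p q h > 0" using a(16) unfolding in_support_def by simp
  interpret mh M p q \<theta> K h by (intro mh.intro mpq_axioms mh_axioms.intro a(2) a(3) wf nh mpos)
  have hne: "h \<noteq> []" using a(14,15) by auto
  define S0 where "S0 = fst (last h)"
  define B where "B = A h"
  define C where "C = onestep \<alpha> S0 (Wpost \<theta> K p q h)"
  have S0K: "S0 \<subseteq> {1..K}" unfolding S0_def using wf hne by (simp add: wfh_def last_conv_nth)
  have fS0: "finite S0" using S0K finite_subset by blast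
  have BS0: "B \<subseteq> S0" unfolding B_def S0_def using P c hne unfolding is_procedure_def by auto
  have BK: "B \<subseteq> {1..K}" using BS0 S0K by auto
  have CK: "C \<subseteq> {1..K}" unfolding C_def using onestep_sub[OF fS0] S0K by auto
  have "LFNR \<theta> K p q A h \<le> \<alpha>" using a(13,14,15,16) unfolding T_alpha_def by auto
  then have avg: "(\<Sum>k\<in>B. Wpost \<theta> K p q h k) / real (max (card B) 1) \<le> \<alpha>"
    unfolding LFNR_def B_def using LFNR_avg[OF a(2,3) wf nh BK[unfolded B_def]] by simp
  obtain \<phi> where inj: "inj_on \<phi> B" and im: "\<phi> ` B \<subseteq> C" and le: "\<forall>b\<in>B. Wpost \<theta> K p q h (\<phi> b) \<le> Wpost \<theta> K p q h b"
    using onestep_dom[OF fS0 BS0 avg] a(11) unfolding C_def by auto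
  have le': "pk (\<phi> b) \<le> pk b" if b: "b \<in> B" for b
  proof -
    have "\<phi> b \<in> {1..K}" using im CK b by blast
    then show ?thesis using pk_mono b BK le by auto
  qed
  obtain \<nu> where \<nu>: "prob_space \<nu>" "sets \<nu> = sets (Mo K \<Otimes>\<^sub>M Mo K)"
      "distr \<nu> (Mo K) fst = distr (PiM C (\<lambda>k. L (pk k))) (Mo K) (Psi C)"
      "distr \<nu> (Mo K) snd = distr (PiM B (\<lambda>k. L (pk k))) (Mo K) (Psi B)"
      "AE z in \<nu>. preceq (fst z) (snd z)"
    using coupling[OF CK BK inj im le'] by blast
  have sw1: "switch \<theta> K p q \<alpha> A t0 h = C" unfolding switch_def C_def S0_def using a(15) by simp
  have sw2: "switch \<theta> K p q \<alpha> A (Suc t0) h = B" unfolding switch_def B_def using a(15) by simp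
  have nl1: "next_law \<theta> K M p q (switch \<theta> K p q \<alpha> A t0) h = distr (PiM C (\<lambda>k. L (pk k))) (Mo K) (Psi C)"
    unfolding next_law_def sw1 by (rule next_law_eq[OF CK])
  have nl2: "next_law \<theta> K M p q (switch \<theta> K p q \<alpha> A (Suc t0)) h = distr (PiM B (\<lambda>k. L (pk k))) (Mo K) (Psi B)"
    unfolding next_law_def sw2 by (rule next_law_eq[OF BK])
  show ?thesis using \<nu> nl1 nl2 by auto
qed


end
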